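(* If a path $\omega\in\Omega$ is ML-random for a computable precise forecasting system $\varphi$, then $I_\textnormal{ML}(\omega)$ is the smallest interval forecast for which $\omega$ is almost ML-random; that is, $\omega$ is almost ML-random for $I_\textnormal{ML}(\omega)$, and $I_\textnormal{ML}(\omega)\subseteq I$ for every interval forecast $I$ for which $\omega$ is almost ML-random.
   Context: $\mathcal{X}=\{0,1\}$; $\Omega=\mathcal{X}^{\mathbb{N}}$ (paths); $\mathbb{S}=\bigcup_{n\ge0}\mathcal X^n$ (situations), $\square$ the empty string, $\omega_{1:n}=(\omega_1,\dots,\omega_n)$. $\mathcal I$: nonempty closed intervals $I\subseteq[0,1]$. A forecasting system is a map $\varphi:\mathbb S\to\mathcal I$, with $\underline\varphi=\min\varphi$, $\overline\varphi=\max\varphi$; precise if $\underline\varphi=\overline\varphi$; an interval forecast $I$ is identified with the constant forecasting system $s\mapsto I$. A real map $r$ on a countable effectively encoded set $\mathcal D$ is computable if there is a recursive $q:\mathcal D\times\mathbb N_0\to\mathbb Q$ with $|r(d)-q(d,n)|<2^{-n}$; lower semicomputable if there is a recursive $q$ with $q(d,n+1)\ge q(d,n)$ and $\lim_nq(d,n)=r(d)$. $\varphi$ is computable if $\underline\varphi,\overline\varphi$ are. For $f:\mathcal X\to\mathbb R$, $\overline E_I(f)=\max_{p\in I}[pf(1)+(1-p)f(0)]$. A test supermartingale for $\varphi$ is $T:\mathbb S\to\mathbb R_{\ge0}$ with $T(\square)=1$ and $\overline E_{\varphi(s)}(T(s\,\cdot)-T(s))\le0$ for all $s$. $\omega$ is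 ML-random for $\varphi$ if no lower semicomputable test supermartingale $T$ for $\varphi$ satisfies $\limsup_nT(\omega_{1:n})=\infty$. $\mathcal I_\textnormal{ML}(\omega)=\{I\in\mathcal I:\omega\text{ ML-random for }I\}$, $I_\textnormal{ML}(\omega)=\bigcap_{I\in\mathcal I_\textnormal{ML}(\omega)}I$. $\omega$ is almost ML-random for $I\in\mathcal I$ if it is ML-random for every interval forecast $[\min I-\epsilon_1,\max I+\epsilon_2]\cap[0,1]$ with $\epsilon_1,\epsilon_2>0$. *)

theory Defs
  imports Complex_Main "HOL-Library.Nat_Bijection" "HOL-Library.Liminf_Limsup" "HOL-Library.Extended_Real"
begin

datatype recf = Z | S | Id nat | Cn recf "recf list" | Pr recf recf | Mn recf

inductive rec_eval :: "recf \<Rightarrow> nat list \<Rightarrow> nat \<Rightarrow> bool" where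
  zero: "rec_eval Z xs 0"
| succ: "rec_eval S (x # xs) (Suc x)"
| proj: "i < length xs \<Longrightarrow> rec_eval (Id i) xs (xs ! i)"
| comp: "list_all2 (\<lambda>g y. rec_eval g xs y) gs ys \<Longrightarrow> rec_eval f ys z \<Longrightarrow> rec_eval (Cn f gs) xs z"
| pr0: "rec_eval f xs y \<Longrightarrow> rec_eval (Pr f g) (0 # xs) y"
| prS: "rec_eval (Pr f g) (n # xs) y \<Longrightarrow> rec_eval g (n # y # xs) z \<Longrightarrow> rec_eval (Pr f g) (Suc n # xs) z"
| mn: "rec_eval f (n # xs) 0 \<Longrightarrow> (\<forall>m<n. \<exists>y. y \<noteq> 0 \<and> rec_eval f (m # xs) y) \<Longrightarrow> rec_eval (Mn f) xs n"

text \<open>Situations are finite bool lists (True = 1, False = 0).\<close>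
type_synonym sit = "bool list"
type_synonym path = "nat \<Rightarrow> bool"

definition sit_encode :: "sit \<Rightarrow> nat" where
  "sit_encode s = list_encode (map (\<lambda>b. if b then 1 else 0) s)"

definition rat_encode :: "rat \<Rightarrow> nat" where
  "rat_encode q = prod_encode (int_encode (fst (quotient_of q)), nat (snd (quotient_of q)))"

definition recursive_sn_rat :: "(sit \<Rightarrow> nat \<Rightarrow> rat) \<Rightarrow> bool" where
  "recursive_sn_rat q \<longleftrightarrow> (\<exists>r. \<forall>d n. rec_eval r [sit_encode d, n] (rat_encode (q d n)))"

definition computable_real :: "(sit \<Rightarrow> real) \<Rightarrow> bool" where
  "computable_real r \<longleftrightarrow> (\<exists>q. recursive_sn_rat q \<and>
      (\<forall>d n. \<bar>r d - real_of_rat (q d n)\<bar> < (1/2) ^ n))"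

definition lower_semicomputable :: "(sit \<Rightarrow> real) \<Rightarrow> bool" where
  "lower_semicomputable r \<longleftrightarrow> (\<exists>q. recursive_sn_rat q \<and>
      (\<forall>d n. q d n \<le> q d (Suc n)) \<and>
      (\<forall>d. (\<lambda>n. real_of_rat (q d n)) \<longlonglongrightarrow> r d))"

definition interval_forecast :: "real set \<Rightarrow> bool" where
  "interval_forecast I \<longleftrightarrow> (\<exists>a b. 0 \<le> a \<and> a \<le> b \<and> b \<le> 1 \<and> I = {a..b})"

definition forecasting_system :: "(sit \<Rightarrow> real set) \<Rightarrow> bool" where
  "forecasting_system \<phi> \<longleftrightarrow> (\<forall>s. interval_forecast (\<phi> s))"

definition lower_fc :: "(sit \<Rightarrow> real set) \<Rightarrow> sit \<Rightarrow> real" where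
  "lower_fc \<phi> s = Inf (\<phi> s)"

definition upper_fc :: "(sit \<Rightarrow> real set) \<Rightarrow> sit \<Rightarrow> real" where
  "upper_fc \<phi> s = Sup (\<phi> s)"

definition precise_fc :: "(sit \<Rightarrow> real set) \<Rightarrow> bool" where
  "precise_fc \<phi> \<longleftrightarrow> (\<forall>s. lower_fc \<phi> s = upper_fc \<phi> s)"

definition computable_fc :: "(sit \<Rightarrow> real set) \<Rightarrow> bool" where
  "computable_fc \<phi> \<longleftrightarrow> computable_real (lower_fc \<phi>) \<and> computable_real (upper_fc \<phi>)"

definition upper_exp :: "real set \<Rightarrow> (bool \<Rightarrow> real) \<Rightarrow> real" where
  "upper_exp I f = (SUP p\<in>I. p * f True + (1 - p) * f False)"

definition test_supermartingale :: "(sit \<Rightarrow> real set) \<Rightarrow> (sit \<Rightarrow> real) \<Rightarrow> bool" where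
  "test_supermartingale \<phi> T \<longleftrightarrow> T [] = 1 \<and> (\<forall>s. 0 \<le> T s) \<and>
     (\<forall>s. upper_exp (\<phi> s) (\<lambda>x. T (s @ [x]) - T s) \<le> 0)"

definition prefix :: "path \<Rightarrow> nat \<Rightarrow> sit" where
  "prefix \<omega> n = map \<omega> [0..<n]"

definition mlrandom :: "(sit \<Rightarrow> real set) \<Rightarrow> path \<Rightarrow> bool" where
  "mlrandom \<phi> \<omega> \<longleftrightarrow> \<not> (\<exists>T. lower_semicomputable T \<and> test_supermartingale \<phi> T \<and>
      limsup (\<lambda>n. ereal (T (prefix \<omega> n))) = \<infinity>)"

definition I_mlr :: "path \<Rightarrow> real set" where
  "I_mlr \<omega> = \<Inter> {I. interval_forecast I \<and> mlrandom (\<lambda>_. I) \<omega>}"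

definition almost_mlrandom :: "real set \<Rightarrow> path \<Rightarrow> bool" where
  "almost_mlrandom I \<omega> \<longleftrightarrow> (\<forall>e1 e2. 0 < e1 \<longrightarrow> 0 < e2 \<longrightarrow>
      mlrandom (\<lambda>_. {Inf I - e1 .. Sup I + e2} \<inter> {0..1}) \<omega>)"

end

theory Submission
  imports Defs
begin

named_theorems rc_intros

definition rcomp :: "nat \<Rightarrow> (nat list \<Rightarrow> nat) \<Rightarrow> bool" where
  "rcomp k f \<longleftrightarrow> (\<exists>r. \<forall>xs. length xs = k \<longrightarrow> rec_eval r xs (f xs))"

lemma rc_cong: "rcomp k f \<Longrightarrow> (\<And>xs. length xs = k \<Longrightarrow> f xs = g xs) \<Longrightarrow> rcomp k g"
  unfolding rcomp_def by metis

lemma rc_const: "rcomp k (\<lambda>_. c)"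
proof -
  have "\<exists>r. \<forall>xs. rec_eval r xs c"
  proof (induction c)
    case 0 then show ?case using rec_eval.zero by blast
  next
    case (Suc c)
    then obtain r where r: "\<forall>xs. rec_eval r xs c" by blast
    have "rec_eval (Cn S [r]) xs (Suc c)" for xs
      by (rule rec_eval.comp[where ys="[c]"]) (use r rec_eval.succ[of c "[]"] in auto)
    then show ?case by blast
  qed
  then show ?thesis unfolding rcomp_def by blast
qed

lemma rc_proj: "i < k \<Longrightarrow> rcomp k (\<lambda>xs. xs ! i)"
  unfolding rcomp_def by (auto intro!: exI[of _ "Id i"] rec_eval.proj)

lemma rc_compL:
  assumes "rcomp (length gs) f" "\<forall>g\<in>set gs. rcomp k g"
  shows "rcomp k (\<lambda>xs. f (map (\<lambda>g. g xs) gs))"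
proof -
  have "\<exists>rs. length rs = length gs \<and> (\<forall>i<length gs. \<forall>xs. length xs = k \<longrightarrow> rec_eval (rs!i) xs ((gs!i) xs))"
    using assms(2)
  proof (induction gs)
    case Nil then show ?case by auto
  next
    case (Cons g gs)
    then obtain rs where rs: "length rs = length gs" "\<forall>i<length gs. \<forall>xs. length xs = k \<longrightarrow> rec_eval (rs!i) xs ((gs!i) xs)" by auto
    from Cons.prems obtain r where r: "\<forall>xs. length xs = k \<longrightarrow> rec_eval r xs (g xs)" unfolding rcomp_def by auto
    show ?case
      apply (rule exI[of _ "r # rs"])
      using rs r by (auto simp: nth_Cons split: nat.splits)
  qed
  then obtain rs where rs: "length rs = length gs" "\<forall>i<length gs. \<forall>xs. length xs = k \<longrightarrow> rec_eval (rs!i) xs ((gs!i) xs)" by auto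
  from assms(1) obtain rf where rf: "\<forall>ys. length ys = length gs \<longrightarrow> rec_eval rf ys (f ys)" unfolding rcomp_def by auto
  have "rec_eval (Cn rf rs) xs (f (map (\<lambda>g. g xs) gs))" if "length xs = k" for xs
    apply (rule rec_eval.comp[where ys="map (\<lambda>g. g xs) gs"])
    using rs that rf by (auto simp: list_all2_conv_all_nth)
  then show ?thesis unfolding rcomp_def by blast
qed

lemma rc_comp1: "rcomp 1 f \<Longrightarrow> rcomp k g \<Longrightarrow> rcomp k (\<lambda>xs. f [g xs])"
  using rc_compL[of "[g]" f k] by auto

lemma rc_comp2: "rcomp 2 f \<Longrightarrow> rcomp k g \<Longrightarrow> rcomp k h \<Longrightarrow> rcomp k (\<lambda>xs. f [g xs, h xs])"
  using rc_compL[of "[g,h]" f k] by (auto simp: numeral_2_eq_2)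

lemma rc_comp3: "rcomp 3 f \<Longrightarrow> rcomp k g \<Longrightarrow> rcomp k h \<Longrightarrow> rcomp k u \<Longrightarrow> rcomp k (\<lambda>xs. f [g xs, h xs, u xs])"
  using rc_compL[of "[g,h,u]" f k] by (auto simp: numeral_3_eq_3)

lemma rc_pr:
  assumes "rcomp k f" "rcomp (Suc (Suc k)) g"
  shows "rcomp (Suc k) (\<lambda>xs. rec_nat (f (tl xs)) (\<lambda>n y. g (n # y # tl xs)) (hd xs))"
proof -
  obtain rf where rf: "\<forall>xs. length xs = k \<longrightarrow> rec_eval rf xs (f xs)" using assms(1) unfolding rcomp_def by auto
  obtain rg where rg: "\<forall>xs. length xs = Suc (Suc k) \<longrightarrow> rec_eval rg xs (g xs)" using assms(2) unfolding rcomp_def by auto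
  have "rec_eval (Pr rf rg) (n # xs) (rec_nat (f xs) (\<lambda>n y. g (n # y # xs)) n)" if "length xs = k" for n xs
  proof (induction n)
    case 0 then show ?case using rf that by (auto intro: rec_eval.pr0)
  next
    case (Suc n) then show ?case using rg that by (auto intro: rec_eval.prS)
  qed
  then have "rec_eval (Pr rf rg) xs (rec_nat (f (tl xs)) (\<lambda>n y. g (n # y # tl xs)) (hd xs))"
    if "length xs = Suc k" for xs using that by (cases xs) auto
  then show ?thesis unfolding rcomp_def by blast
qed

lemma rc_mn:
  assumes "rcomp (Suc k) f" "\<And>xs. length xs = k \<Longrightarrow> \<exists>n. f (n # xs) = 0"
  shows "rcomp k (\<lambda>xs. LEAST n. f (n # xs) = 0)"
proof -
  obtain rf where rf: "\<forall>xs. length xs = Suc k \<longrightarrow> rec_eval rf xs (f xs)" using assms(1) unfolding rcomp_def by auto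
  have "rec_eval (Mn rf) xs (LEAST n. f (n # xs) = 0)" if "length xs = k" for xs
  proof (rule rec_eval.mn)
    from assms(2)[OF that] obtain n where "f (n # xs) = 0" by auto
    then have "f ((LEAST n. f (n # xs) = 0) # xs) = 0" by (rule LeastI)
    then show "rec_eval rf ((LEAST n. f (n # xs) = 0) # xs) 0" using rf that by (metis length_Cons)
    show "\<forall>m<(LEAST n. f (n # xs) = 0). \<exists>y. y \<noteq> 0 \<and> rec_eval rf (m # xs) y"
    proof (intro allI impI)
      fix m assume "m < (LEAST n. f (n # xs) = 0)"
      then have "f (m # xs) \<noteq> 0" by (rule not_less_Least)
      moreover have "rec_eval rf (m # xs) (f (m # xs))" using rf that by simp
      ultimately show "\<exists>y. y \<noteq> 0 \<and> rec_eval rf (m # xs) y" by blast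
    qed
  qed
  then show ?thesis unfolding rcomp_def by blast
qed

lemma rc_Suc: "rcomp k g \<Longrightarrow> rcomp k (\<lambda>xs. Suc (g xs))"
proof -
  have "rcomp 1 (\<lambda>ys. Suc (ys!0))" unfolding rcomp_def
    by (rule exI[of _ S]) (auto simp: length_Suc_conv intro: rec_eval.succ[of _ "[]", simplified])
  then show "rcomp k g \<Longrightarrow> rcomp k (\<lambda>xs. Suc (g xs))" using rc_comp1 by fastforce
qed

lemma rc_hd: "rcomp (Suc k) hd"
proof (rule rc_cong[OF rc_proj[of 0 "Suc k"]])
  fix xs :: "nat list" assume "length xs = Suc k"
  then show "xs ! 0 = hd xs" by (cases xs) auto
qed simp

lemma rc_tl_nth: assumes "i < k" shows "rcomp (Suc k) (\<lambda>xs. tl xs ! i)"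
proof (rule rc_cong[OF rc_proj[of "Suc i" "Suc k"]])
  fix xs :: "nat list" assume "length xs = Suc k"
  then show "xs ! Suc i = tl xs ! i" by (cases xs) auto
qed (use assms in simp)

lemma rc_rec:
  assumes "rcomp k f" "rcomp (Suc (Suc k)) g" "rcomp k m"
  shows "rcomp k (\<lambda>xs. rec_nat (f xs) (\<lambda>n y. g (n # y # xs)) (m xs))"
proof -
  have 1: "rcomp (Suc k) (\<lambda>xs. rec_nat (f (tl xs)) (\<lambda>n y. g (n # y # tl xs)) (hd xs))"
    using rc_pr assms by blast
  have "rcomp k (\<lambda>xs. (\<lambda>xs. rec_nat (f (tl xs)) (\<lambda>n y. g (n # y # tl xs)) (hd xs)) (map (\<lambda>g. g xs) (m # map (\<lambda>i xs. xs ! i) [0..<k])))"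
    by (rule rc_compL) (use 1 assms in \<open>auto intro: rc_proj\<close>)
  then show ?thesis
  proof (rule rc_cong)
    fix xs :: "nat list" assume "length xs = k"
    then have e: "map (\<lambda>i. xs ! i) [0..<k] = xs" using map_nth by blast
    show "(\<lambda>xs. rec_nat (f (tl xs)) (\<lambda>n y. g (n # y # tl xs)) (hd xs)) (map (\<lambda>g. g xs) (m # map (\<lambda>i xs. xs ! i) [0..<k])) =
      rec_nat (f xs) (\<lambda>n y. g (n # y # xs)) (m xs)"
      by (simp add: comp_def e)
  qed
qed

lemma rc_add: "rcomp k g \<Longrightarrow> rcomp k h \<Longrightarrow> rcomp k (\<lambda>xs. g xs + h xs)"
proof -
  have "rcomp 2 (\<lambda>xs. rec_nat (xs!1) (\<lambda>n y. Suc y) (xs!0))"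
  proof -
    have a: "rcomp (Suc (Suc 2)) (\<lambda>ys. Suc (ys!1))" by (intro rc_Suc rc_proj) simp
    have p1: "rcomp 2 (\<lambda>xs. xs!1)" by (rule rc_proj) simp
    have p0: "rcomp 2 (\<lambda>xs. xs!0)" by (rule rc_proj) simp
    show ?thesis using rc_rec[where k=2 and f="\<lambda>xs. xs!1" and g="\<lambda>ys. Suc (ys!1)" and m="\<lambda>xs. xs!0", OF p1 a p0] by simp
  qed
  then have "rcomp 2 (\<lambda>xs. xs!0 + xs!1)"
  proof (rule rc_cong)
    fix xs :: "nat list"
    have "\<And>a b::nat. rec_nat b (\<lambda>n y. Suc y) a = a + b" by (induct_tac a) auto
    then show "rec_nat (xs!1) (\<lambda>n y. Suc y) (xs!0) = xs!0 + xs!1" by blast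
  qed
  from rc_comp2[OF this] show "rcomp k g \<Longrightarrow> rcomp k h \<Longrightarrow> rcomp k (\<lambda>xs. g xs + h xs)"
    by simp
qed


declare rc_const[rc_intros] rc_proj[rc_intros] rc_Suc[rc_intros] rc_add[rc_intros] rc_hd[rc_intros] rc_tl_nth[rc_intros]

lemma rc_recI:
  assumes "rcomp (Suc (Suc k)) g" "rcomp k f" "rcomp k m"
    "\<And>xs. length xs = k \<Longrightarrow> F xs = rec_nat (f xs) (\<lambda>n y. g (n # y # xs)) (m xs)"
  shows "rcomp k F"
  using rc_rec[OF assms(2,1,3)] by (rule rc_cong) (use assms(4) in simp)

lemma rc_op2:
  assumes "rcomp 2 (\<lambda>xs. F (xs!0) (xs!1))"
  shows "rcomp k g \<Longrightarrow> rcomp k h \<Longrightarrow> rcomp k (\<lambda>xs. F (g xs) (h xs))"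
  using rc_comp2[OF assms] by simp

lemma rc_op1:
  assumes "rcomp 1 (\<lambda>xs. F (xs!0))"
  shows "rcomp k g \<Longrightarrow> rcomp k (\<lambda>xs. F (g xs))"
  using rc_comp1[OF assms] by simp

lemma rc_mult0: "rcomp 2 (\<lambda>xs. xs!0 * xs!1)"
proof -
  have e: "\<And>a b::nat. rec_nat 0 (\<lambda>n y. y + b) a = a * b" by (induct_tac a) auto
  show ?thesis
    by (rule rc_recI[where g="\<lambda>ys. ys!1 + ys!3" and f="\<lambda>_. 0" and m="\<lambda>xs. xs!0"])
      (auto intro!: rc_intros simp: e)
qed

lemma rc_mult[rc_intros]: "rcomp k g \<Longrightarrow> rcomp k h \<Longrightarrow> rcomp k (\<lambda>xs. g xs * h xs)"
  by (rule rc_op2[OF rc_mult0])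

lemma rc_pred0: "rcomp 1 (\<lambda>xs. xs!0 - 1)"
proof -
  have e1: "\<And>a::nat. rec_nat 0 (\<lambda>n y. n) a = a - 1" by (induct_tac a) auto
  show ?thesis
    by (rule rc_recI[where g="\<lambda>ys. ys!0" and f="\<lambda>_. 0" and m="\<lambda>xs. xs!0"])
      (auto intro!: rc_intros simp: e1)
qed

lemma rc_sub0: "rcomp 2 (\<lambda>xs. xs!0 - xs!1)"
proof (rule rc_recI[where g="\<lambda>ys. ys!1 - 1" and f="\<lambda>xs. xs!0" and m="\<lambda>xs. xs!1"])
  show "rcomp (Suc (Suc 2)) (\<lambda>ys. ys!1 - 1)"
    by (rule rc_op1[OF rc_pred0]) (rule rc_proj, simp)
  have e: "\<And>a b::nat. rec_nat a (\<lambda>n y. y - Suc 0) b = a - b" by (induct_tac b) auto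
  show "\<And>xs. length xs = 2 \<Longrightarrow> xs!0 - xs!1 = rec_nat (xs!0) (\<lambda>n y. (n # y # xs) ! 1 - 1) (xs!1)"
    by (simp add: e)
qed (auto intro!: rc_intros)

lemma rc_sub[rc_intros]: "rcomp k g \<Longrightarrow> rcomp k h \<Longrightarrow> rcomp k (\<lambda>xs. g xs - h xs)"
  by (rule rc_op2[OF rc_sub0])

definition rpred :: "nat \<Rightarrow> (nat list \<Rightarrow> bool) \<Rightarrow> bool" where
  "rpred k P \<longleftrightarrow> rcomp k (\<lambda>xs. if P xs then 1 else 0)"

lemma rp_le[rc_intros]: assumes "rcomp k g" "rcomp k h" shows "rpred k (\<lambda>xs. g xs \<le> h xs)"
  unfolding rpred_def
  by (rule rc_cong[where f="\<lambda>xs. 1 - (g xs - h xs)"]) (use assms in \<open>auto intro!: rc_intros\<close>)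

lemma rp_less[rc_intros]: assumes "rcomp k g" "rcomp k h" shows "rpred k (\<lambda>xs. g xs < h xs)"
  using rp_le[of k "\<lambda>xs. Suc (g xs)" h] assms by (auto intro!: rc_intros simp: Suc_le_eq)

lemma rp_not[rc_intros]: assumes "rpred k P" shows "rpred k (\<lambda>xs. \<not> P xs)"
  unfolding rpred_def
  by (rule rc_cong[where f="\<lambda>xs. 1 - (if P xs then 1 else 0)"]) (use assms in \<open>auto intro!: rc_intros simp: rpred_def\<close>)

lemma rp_and[rc_intros]: assumes "rpred k P" "rpred k Q" shows "rpred k (\<lambda>xs. P xs \<and> Q xs)"
  unfolding rpred_def
  by (rule rc_cong[where f="\<lambda>xs. (if P xs then 1 else 0) * (if Q xs then 1 else 0)"]) (use assms in \<open>auto intro!: rc_intros simp: rpred_def\<close>)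

lemma rp_or[rc_intros]: assumes "rpred k P" "rpred k Q" shows "rpred k (\<lambda>xs. P xs \<or> Q xs)"
  using rp_not[OF rp_and[OF rp_not rp_not], of k P Q] assms by simp

lemma rp_eq[rc_intros]: assumes "rcomp k g" "rcomp k h" shows "rpred k (\<lambda>xs. g xs = h xs)"
  using rp_and[OF rp_le rp_le, of k g h h g] assms by (simp add: eq_iff)

lemma rp_const[rc_intros]: "rpred k (\<lambda>_. b)"
  unfolding rpred_def by (rule rc_const)

lemma rc_if[rc_intros]: assumes "rpred k P" "rcomp k x" "rcomp k y" shows "rcomp k (\<lambda>xs. if P xs then x xs else y xs)"
  by (rule rc_cong[where f="\<lambda>xs. (if P xs then 1 else 0) * x xs + (1 - (if P xs then 1 else 0)) * y xs"])
    (use assms in \<open>auto intro!: rc_intros simp: rpred_def\<close>)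

lemma rc_least:
  assumes "rpred (Suc k) Q" "\<And>xs. length xs = k \<Longrightarrow> \<exists>n. Q (n # xs)"
  shows "rcomp k (\<lambda>xs. LEAST n. Q (n # xs))"
proof -
  have b: "rcomp (Suc k) (\<lambda>ys. 1 - (if Q ys then 1 else 0::nat))"
    using assms(1) by (auto intro!: rc_intros simp: rpred_def)
  have "\<exists>n. (\<lambda>ys. 1 - (if Q ys then 1 else 0::nat)) (n # xs) = 0" if "length xs = k" for xs
    using assms(2)[OF that] by auto
  from rc_mn[OF b this] show ?thesis
  proof (rule rc_cong)
    fix xs :: "nat list"
    have "(\<lambda>n. (1::nat) - (if Q (n#xs) then 1 else 0) = 0) = (\<lambda>n. Q (n#xs))" by auto
    then show "(LEAST n. (1::nat) - (if Q (n#xs) then 1 else 0) = 0) = (LEAST n. Q (n#xs))" by simp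
  qed
qed

lemma rc_div0: "rcomp 2 (\<lambda>xs. xs!0 div xs!1)"
proof -
  have e: "a div b = (LEAST n. b = 0 \<or> a < Suc n * b)" for a b :: nat
  proof (cases "b = 0")
    case False
    show ?thesis
    proof (rule Least_equality[symmetric])
      show "b = 0 \<or> a < Suc (a div b) * b" using False
        by (metis div_less_iff_less_mult lessI bot_nat_0.not_eq_extremum)
      show "\<And>y. b = 0 \<or> a < Suc y * b \<Longrightarrow> a div b \<le> y" using False
        by (metis div_less_iff_less_mult less_Suc_eq_le bot_nat_0.not_eq_extremum)
    qed
  qed simp
  have "rcomp 2 (\<lambda>xs. LEAST n. (\<lambda>ys. ys!2 = 0 \<or> ys!1 < Suc (ys!0) * ys!2) (n # xs))"
  proof (rule rc_least)
    show "rpred (Suc 2) (\<lambda>ys. ys!2 = 0 \<or> ys!1 < Suc (ys!0) * ys!2)" by (auto intro!: rc_intros)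
    show "\<exists>n. (\<lambda>ys. ys!2 = 0 \<or> ys!1 < Suc (ys!0) * ys!2) (n # xs)" if "length xs = 2" for xs
      by (rule exI[of _ "xs!0"]) (cases "xs!1"; simp)
  qed
  then show ?thesis by (rule rc_cong) (simp add: e)
qed

lemma rc_div[rc_intros]: "rcomp k g \<Longrightarrow> rcomp k h \<Longrightarrow> rcomp k (\<lambda>xs. g xs div h xs)"
  by (rule rc_op2[OF rc_div0])

lemma rc_mod[rc_intros]: assumes "rcomp k g" "rcomp k h" shows "rcomp k (\<lambda>xs. g xs mod h xs)"
proof (rule rc_cong[where f="\<lambda>xs. g xs - h xs * (g xs div h xs)"])
  show "rcomp k (\<lambda>xs. g xs - h xs * (g xs div h xs))" using assms by (intro rc_intros)
qed (simp add: minus_mult_div_eq_mod)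

lemma rp_dvd[rc_intros]: assumes "rcomp k g" "rcomp k h" shows "rpred k (\<lambda>xs. g xs dvd h xs)"
  using rp_eq[of k "\<lambda>xs. h xs mod g xs" "\<lambda>_. 0"] assms by (auto intro!: rc_intros simp: dvd_eq_mod_eq_0)


lemma rc_tri[rc_intros]: "rcomp k g \<Longrightarrow> rcomp k (\<lambda>xs. triangle (g xs))"
  unfolding triangle_def by (intro rc_intros)

lemma rc_penc[rc_intros]: "rcomp k g \<Longrightarrow> rcomp k h \<Longrightarrow> rcomp k (\<lambda>xs. prod_encode (g xs, h xs))"
  unfolding prod_encode_def by (simp, intro rc_intros)

definition pw :: "nat \<Rightarrow> nat" where "pw m = (LEAST w. m < triangle (Suc w))"

lemma pw_ex: "m < triangle (Suc m)"
  by (induct m) (auto simp: triangle_Suc)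

lemma pw_bounds: "triangle (pw m) \<le> m" "m < triangle (Suc (pw m))"
proof -
  show "m < triangle (Suc (pw m))" unfolding pw_def by (rule LeastI[of "\<lambda>w. m < triangle (Suc w)" m, OF pw_ex])
  show "triangle (pw m) \<le> m"
  proof (cases "pw m")
    case 0 then show ?thesis by simp
  next
    case (Suc w)
    then have "w < pw m" by simp
    then have "\<not> m < triangle (Suc w)" unfolding pw_def by (rule not_less_Least)
    then show ?thesis using Suc by simp
  qed
qed

lemma prod_decode_pw: "prod_decode m = (m - triangle (pw m), pw m - (m - triangle (pw m)))"
proof -
  have a: "m - triangle (pw m) \<le> pw m" using pw_bounds[of m] by (simp add: triangle_Suc)
  have "prod_encode (m - triangle (pw m), pw m - (m - triangle (pw m))) = m"
    using a pw_bounds(1)[of m] by (simp add: prod_encode_def)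
  then show ?thesis by (metis prod_encode_inverse)
qed

lemma rc_pw[rc_intros]: assumes "rcomp k g" shows "rcomp k (\<lambda>xs. pw (g xs))"
proof -
  have "rcomp 1 (\<lambda>xs. LEAST n. (\<lambda>ys. ys!1 < triangle (Suc (ys!0))) (n # xs))"
  proof (rule rc_least)
    show "\<exists>n. (\<lambda>ys. ys!1 < triangle (Suc (ys!0))) (n # xs)" for xs
      using pw_ex[of "xs!0"] by (metis nth_Cons_0 nth_Cons_Suc One_nat_def)
  qed (auto intro!: rc_intros)
  then have "rcomp 1 (\<lambda>xs. pw (xs!0))" by (rule rc_cong) (simp add: pw_def)
  from rc_op1[OF this assms] show ?thesis .
qed

lemma rc_pfst[rc_intros]: "rcomp k g \<Longrightarrow> rcomp k (\<lambda>xs. fst (prod_decode (g xs)))"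
  by (subst prod_decode_pw, simp, intro rc_intros)

lemma rc_psnd[rc_intros]: "rcomp k g \<Longrightarrow> rcomp k (\<lambda>xs. snd (prod_decode (g xs)))"
  by (subst prod_decode_pw, simp, intro rc_intros)

definition ltl :: "nat \<Rightarrow> nat" where "ltl c = (if c = 0 then 0 else snd (prod_decode (c - 1)))"
definition lhd :: "nat \<Rightarrow> nat" where "lhd c = (if c = 0 then 0 else fst (prod_decode (c - 1)))"
definition ldrop :: "nat \<Rightarrow> nat \<Rightarrow> nat" where "ldrop n c = rec_nat c (\<lambda>i y. ltl y) n"
definition lnth :: "nat \<Rightarrow> nat \<Rightarrow> nat" where "lnth c j = lhd (ldrop j c)"
definition llen :: "nat \<Rightarrow> nat" where "llen c = (LEAST m. ldrop m c = 0)"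
definition ltake :: "nat \<Rightarrow> nat \<Rightarrow> nat" where
  "ltake m c = rec_nat 0 (\<lambda>i acc. Suc (prod_encode (lnth c (m - Suc i), acc))) m"

lemma ltl_enc: "ltl (list_encode l) = list_encode (tl l)"
  by (cases l) (auto simp: ltl_def)

lemma lhd_enc: "l \<noteq> [] \<Longrightarrow> lhd (list_encode l) = hd l"
  by (cases l) (auto simp: lhd_def)

lemma ldrop_enc: "ldrop n (list_encode l) = list_encode (drop n l)"
  by (induct n) (auto simp: ldrop_def ltl_enc drop_Suc tl_drop)

lemma lnth_enc: "j < length l \<Longrightarrow> lnth (list_encode l) j = l ! j"
  by (simp add: lnth_def ldrop_enc lhd_enc hd_drop_conv_nth)

lemma list_encode_0: "list_encode l = 0 \<longleftrightarrow> l = []"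
  by (cases l) auto

lemma llen_enc: "llen (list_encode l) = length l"
  unfolding llen_def ldrop_enc list_encode_0
  by (rule Least_equality) auto

lemma ltake_enc: assumes "m \<le> length l" shows "ltake m (list_encode l) = list_encode (take m l)"
proof -
  have "i \<le> m \<Longrightarrow> rec_nat 0 (\<lambda>i acc. Suc (prod_encode (lnth (list_encode l) (m - Suc i), acc))) i
        = list_encode (drop (m - i) (take m l))" for i
  proof (induct i)
    case 0 then show ?case by simp
  next
    case (Suc i)
    have lt: "m - Suc i < length (take m l)" using Suc.prems assms by simp
    have "drop (m - Suc i) (take m l) = (take m l) ! (m - Suc i) # drop (Suc (m - Suc i)) (take m l)"
      using lt by (rule Cons_nth_drop_Suc[symmetric])
    moreover have "Suc (m - Suc i) = m - i" using Suc.prems by simp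
    moreover have "(take m l) ! (m - Suc i) = l ! (m - Suc i)" using Suc.prems by simp
    moreover have "lnth (list_encode l) (m - Suc i) = l ! (m - Suc i)" using lt by (simp add: lnth_enc)
    ultimately show ?case using Suc by simp
  qed
  from this[of m] show ?thesis by (simp add: ltake_def)
qed

lemma rc_ltl[rc_intros]: "rcomp k g \<Longrightarrow> rcomp k (\<lambda>xs. ltl (g xs))"
  unfolding ltl_def by (intro rc_intros)

lemma rc_lhd[rc_intros]: "rcomp k g \<Longrightarrow> rcomp k (\<lambda>xs. lhd (g xs))"
  unfolding lhd_def by (intro rc_intros)

lemma rc_ldrop0: "rcomp 2 (\<lambda>xs. ldrop (xs!0) (xs!1))"
  by (rule rc_recI[where g="\<lambda>ys. ltl (ys!1)" and f="\<lambda>xs. xs!1" and m="\<lambda>xs. xs!0"])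
    (auto intro!: rc_intros simp: ldrop_def)

lemma rc_ldrop[rc_intros]: "rcomp k g \<Longrightarrow> rcomp k h \<Longrightarrow> rcomp k (\<lambda>xs. ldrop (g xs) (h xs))"
  by (rule rc_op2[OF rc_ldrop0])

lemma rc_lnth[rc_intros]: "rcomp k g \<Longrightarrow> rcomp k h \<Longrightarrow> rcomp k (\<lambda>xs. lnth (g xs) (h xs))"
  unfolding lnth_def by (intro rc_intros)

lemma rc_llen[rc_intros]: assumes "rcomp k g" shows "rcomp k (\<lambda>xs. llen (g xs))"
proof -
  have "rcomp 1 (\<lambda>xs. LEAST n. (\<lambda>ys. ldrop (ys!0) (ys!1) = 0) (n # xs))"
  proof (rule rc_least)
    show "\<exists>n. (\<lambda>ys. ldrop (ys!0) (ys!1) = 0) (n # xs)" for xs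
      using ldrop_enc[of "length (list_decode (xs!0))" "list_decode (xs!0)"]
      by (auto simp: list_decode_inverse)
  qed (auto intro!: rc_intros)
  then have "rcomp 1 (\<lambda>xs. llen (xs!0))" by (rule rc_cong) (simp add: llen_def)
  from rc_op1[OF this assms] show ?thesis .
qed

lemma rc_ltake0: "rcomp 2 (\<lambda>xs. ltake (xs!0) (xs!1))"
  by (rule rc_recI[where g="\<lambda>ys. Suc (prod_encode (lnth (ys!3) (ys!2 - Suc (ys!0)), ys!1))" and f="\<lambda>xs. 0" and m="\<lambda>xs. xs!0"])
    (auto intro!: rc_intros simp: ltake_def)

lemma rc_ltake[rc_intros]: "rcomp k g \<Longrightarrow> rcomp k h \<Longrightarrow> rcomp k (\<lambda>xs. ltake (g xs) (h xs))"
  by (rule rc_op2[OF rc_ltake0])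


lemma gcd_least_form:
  fixes P Q :: nat assumes "Q > 0"
  shows "gcd P Q = Q - (LEAST t. Q \<le> t \<or> ((Q - t) dvd P \<and> (Q - t) dvd Q))"
proof -
  define G where "G = gcd P Q"
  have G0: "G > 0" "G \<le> Q" using assms by (auto simp: G_def intro: dvd_imp_le)
  let ?p = "\<lambda>t. Q \<le> t \<or> ((Q - t) dvd P \<and> (Q - t) dvd Q)"
  define t where "t = (LEAST t. ?p t)"
  have pt0: "?p (Q - G)" using G0 by (simp add: G_def)
  then have tle: "t \<le> Q - G" unfolding t_def by (rule Least_le)
  have pt: "?p t" unfolding t_def by (rule LeastI[of ?p, OF pt0])
  have "t < Q" using tle G0 by simp
  then have d: "(Q - t) dvd P" "(Q - t) dvd Q" using pt by auto
  then have "(Q - t) dvd G" by (simp add: G_def)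
  then have "Q - t \<le> G" using G0 by (simp add: dvd_imp_le)
  then have "Q - t = G" using tle G0 by simp
  then show ?thesis unfolding G_def t_def by simp
qed

lemma rc_gcd[rc_intros]: assumes "rcomp k g" "rcomp k h" shows "rcomp k (\<lambda>xs. gcd (g xs) (h xs))"
proof -
  have "rcomp 2 (\<lambda>xs. LEAST n. (\<lambda>ys. ys!2 \<le> ys!0 \<or> ((ys!2 - ys!0) dvd ys!1 \<and> (ys!2 - ys!0) dvd ys!2)) (n # xs))"
  proof (rule rc_least)
    show "\<exists>n. (\<lambda>ys. ys!2 \<le> ys!0 \<or> ((ys!2 - ys!0) dvd ys!1 \<and> (ys!2 - ys!0) dvd ys!2)) (n # xs)" for xs :: "nat list"
      by (rule exI[of _ "xs!1"]) auto
  qed (auto intro!: rc_intros)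
  then have b: "rcomp 2 (\<lambda>xs. if xs!1 = 0 then xs!0 else xs!1 - (LEAST n. xs!1 \<le> n \<or> ((xs!1 - n) dvd xs!0 \<and> (xs!1 - n) dvd xs!1)))"
    by (intro rc_intros) simp_all
  have "rcomp 2 (\<lambda>xs. gcd (xs!0) (xs!1))"
    using b by (rule rc_cong) (simp add: gcd_least_form)
  from rc_op2[OF this assms] show ?thesis .
qed

lemma rp_imp[rc_intros]: assumes "rpred k P" "rpred k Q" shows "rpred k (\<lambda>xs. P xs \<longrightarrow> Q xs)"
proof -
  have "rpred k (\<lambda>xs. \<not> P xs \<or> Q xs)" by (intro rc_intros assms)
  then show ?thesis by (simp only: imp_conv_disj)
qed

lemma rp_ifb[rc_intros]: assumes "rpred k P" "rpred k Q" "rpred k R" shows "rpred k (\<lambda>xs. if P xs then Q xs else R xs)"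
proof -
  have "rpred k (\<lambda>xs. (P xs \<and> Q xs) \<or> (\<not> P xs \<and> R xs))" by (intro rc_intros assms)
  then show ?thesis by (simp only: if_bool_eq_disj)
qed

definition rneg :: "nat \<Rightarrow> nat" where "rneg z = fst (prod_decode z) mod 2"
definition rabs :: "nat \<Rightarrow> nat" where "rabs z = (fst (prod_decode z) + 1) div 2"
definition rden :: "nat \<Rightarrow> nat" where "rden z = snd (prod_decode z)"
definition ienc :: "bool \<Rightarrow> nat \<Rightarrow> nat" where "ienc neg P = (if neg \<and> 0 < P then 2*P - 1 else 2*P)"

definition rmul :: "nat \<Rightarrow> nat \<Rightarrow> nat" where
  "rmul z1 z2 = prod_encode (ienc ((rneg z1 + rneg z2) mod 2 = 1)
      ((rabs z1 * rabs z2) div gcd (rabs z1 * rabs z2) (rden z1 * rden z2)),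
      (rden z1 * rden z2) div gcd (rabs z1 * rabs z2) (rden z1 * rden z2))"

definition rle :: "nat \<Rightarrow> nat \<Rightarrow> bool" where
  "rle z1 z2 = (if rneg z1 = 1 then (rneg z2 = 1 \<longrightarrow> rabs z2 * rden z1 \<le> rabs z1 * rden z2)
                 else (rneg z2 = 0 \<and> rabs z1 * rden z2 \<le> rabs z2 * rden z1))"

lemma rc_rneg[rc_intros]: "rcomp k g \<Longrightarrow> rcomp k (\<lambda>xs. rneg (g xs))"
  unfolding rneg_def by (intro rc_intros)
lemma rc_rabs[rc_intros]: "rcomp k g \<Longrightarrow> rcomp k (\<lambda>xs. rabs (g xs))"
  unfolding rabs_def by (intro rc_intros)
lemma rc_rden[rc_intros]: "rcomp k g \<Longrightarrow> rcomp k (\<lambda>xs. rden (g xs))"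
  unfolding rden_def by (intro rc_intros)
lemma rc_ienc[rc_intros]: "rpred k P \<Longrightarrow> rcomp k g \<Longrightarrow> rcomp k (\<lambda>xs. ienc (P xs) (g xs))"
  unfolding ienc_def by (intro rc_intros)
lemma rc_rmul[rc_intros]: "rcomp k g \<Longrightarrow> rcomp k h \<Longrightarrow> rcomp k (\<lambda>xs. rmul (g xs) (h xs))"
  unfolding rmul_def by (intro rc_intros)
lemma rp_rle[rc_intros]: "rcomp k g \<Longrightarrow> rcomp k h \<Longrightarrow> rpred k (\<lambda>xs. rle (g xs) (h xs))"
  unfolding rle_def by (intro rc_intros)

lemma rat_enc_parts:
  assumes "quotient_of q = (a, b)"
  shows "rneg (rat_encode q) = (if a < 0 then 1 else 0)" "rabs (rat_encode q) = nat \<bar>a\<bar>"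
        "rden (rat_encode q) = nat b"
  using assms by (auto simp: rneg_def rabs_def rden_def rat_encode_def int_encode_def sum_encode_def)

lemma ienc_eq: "ienc neg P = int_encode (if neg then - int P else int P)"
  by (auto simp: ienc_def int_encode_def sum_encode_def)

lemma rmul_enc: "rmul (rat_encode p) (rat_encode q) = rat_encode (p * q)"
proof -
  obtain a1 b1 where qp: "quotient_of p = (a1, b1)" by (cases "quotient_of p")
  obtain a2 b2 where qq: "quotient_of q = (a2, b2)" by (cases "quotient_of q")
  have b1: "b1 > 0" using qp by (rule quotient_of_denom_pos)
  have b2: "b2 > 0" using qq by (rule quotient_of_denom_pos)
  define P where "P = nat \<bar>a1\<bar> * nat \<bar>a2\<bar>"
  define Q where "Q = nat b1 * nat b2"
  define G where "G = gcd P Q"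
  define flag where "flag = ((rneg (rat_encode p) + rneg (rat_encode q)) mod 2 = 1)"
  have Q0: "Q > 0" using b1 b2 by (simp add: Q_def)
  have G0: "G > 0" using Q0 by (simp add: G_def)
  have PQ: "nat \<bar>a1 * a2\<bar> = P" "nat \<bar>b1 * b2\<bar> = Q" using b1 b2
    by (auto simp: P_def Q_def abs_mult nat_mult_distrib)
  have gG: "gcd (a1 * a2) (b1 * b2) = int G" unfolding gcd_int_def PQ G_def ..
  have bQ: "b1 * b2 = int Q" using b1 b2 by (simp add: Q_def)
  have fl: "flag \<longleftrightarrow> (a1 < 0) \<noteq> (a2 < 0)"
    using rat_enc_parts(1)[OF qp] rat_enc_parts(1)[OF qq] by (auto simp: flag_def)
  have aP: "a1 * a2 = (if flag then - int P else int P)"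
    unfolding fl P_def
    by (cases "a1 < 0"; cases "a2 < 0") (auto simp: abs_if mult_less_0_iff zero_le_mult_iff)
  have dv: "G dvd P" by (simp add: G_def)
  then obtain t where Pt: "P = G * t" by blast
  have m: "- (int G * int t) div int G = - int t"
  proof -
    have "- (int G * int t) = int G * (- int t)" by simp
    then show ?thesis using G0 by (simp only: nonzero_mult_div_cancel_left[of "int G"])
  qed
  have num: "a1 * a2 div int G = (if flag then - int (P div G) else int (P div G))"
    unfolding aP Pt using G0 m by auto
  have den: "nat (b1 * b2 div int G) = Q div G"
    unfolding bQ by (simp add: zdiv_int[symmetric])
  have "quotient_of (p * q) = (a1 * a2 div int G, b1 * b2 div int G)"
    using b1 b2 by (simp add: rat_times_code qp qq Rat.normalize_def gG Let_def)
  then have "rat_encode (p * q) = prod_encode (int_encode (a1 * a2 div int G), Q div G)"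
    by (simp add: rat_encode_def den)
  also have "\<dots> = rmul (rat_encode p) (rat_encode q)"
    unfolding rmul_def num ienc_eq[symmetric]
    using rat_enc_parts[OF qp] rat_enc_parts[OF qq]
    by (simp add: flag_def P_def Q_def G_def)
  finally show ?thesis ..
qed

lemma nat_prod_le: "0 \<le> a \<Longrightarrow> 0 \<le> b \<Longrightarrow> 0 \<le> c \<Longrightarrow> 0 \<le> d \<Longrightarrow> (nat a * nat b \<le> nat c * nat d) \<longleftrightarrow> a * b \<le> c * d"
  by (simp add: nat_mult_distrib[symmetric] nat_le_eq_zle)

lemma rle_enc: "rle (rat_encode p) (rat_encode q) \<longleftrightarrow> p \<le> q"
proof -
  obtain a1 b1 where qp: "quotient_of p = (a1, b1)" by (cases "quotient_of p")
  obtain a2 b2 where qq: "quotient_of q = (a2, b2)" by (cases "quotient_of q")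
  have b1: "b1 > 0" using qp by (rule quotient_of_denom_pos)
  have b2: "b2 > 0" using qq by (rule quotient_of_denom_pos)
  have pq: "p \<le> q \<longleftrightarrow> a1 * b2 \<le> b1 * a2" by (simp add: rat_less_eq_code qp qq)
  have "rle (rat_encode p) (rat_encode q) \<longleftrightarrow>
     (if a1 < 0 then (a2 < 0 \<longrightarrow> \<bar>a2\<bar> * b1 \<le> \<bar>a1\<bar> * b2) else (a2 \<ge> 0 \<and> \<bar>a1\<bar> * b2 \<le> \<bar>a2\<bar> * b1))"
    unfolding rle_def rat_enc_parts[OF qp] rat_enc_parts[OF qq] using b1 b2
    by (auto simp: nat_prod_le)
  also have "\<dots> \<longleftrightarrow> a1 * b2 \<le> b1 * a2"
  proof (cases "a1 < 0")
    case True
    show ?thesis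
    proof (cases "a2 < 0")
      case True
      with \<open>a1 < 0\<close> show ?thesis by (simp add: abs_if algebra_simps)
    next
      case False
      have "a1 * b2 < 0" using True b2 by (simp add: mult_neg_pos)
      moreover have "0 \<le> b1 * a2" using False b1 by simp
      ultimately show ?thesis using True False by simp
    qed
  next
    case False
    show ?thesis
    proof (cases "a2 < 0")
      case True
      have "0 \<le> a1 * b2" using False b2 by simp
      moreover have "b1 * a2 < 0" using True b1 by (simp add: mult_pos_neg)
      ultimately show ?thesis using True False by simp
    next
      case F2: False
      with False show ?thesis by (simp add: algebra_simps)
    qed
  qed
  finally show ?thesis using pq by simp
qed


definition san :: "nat \<Rightarrow> nat" where
  "san c = rec_nat 0 (\<lambda>i acc. Suc (prod_encode (if lnth c (llen c - Suc i) = 0 then 0 else 1, acc))) (llen c)"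

definition sitdec :: "nat \<Rightarrow> bool list" where "sitdec c = map (\<lambda>x. x \<noteq> 0) (list_decode c)"

lemma san_enc: "san (list_encode l) = list_encode (map (\<lambda>x. if x = 0 then 0 else 1) l)"
proof -
  let ?f = "\<lambda>x::nat. if x = 0 then 0 else 1::nat"
  have "i \<le> length l \<Longrightarrow> rec_nat 0 (\<lambda>i acc. Suc (prod_encode (if lnth (list_encode l) (length l - Suc i) = 0 then 0 else 1, acc))) i
        = list_encode (map ?f (drop (length l - i) l))" for i
  proof (induct i)
    case 0 then show ?case by simp
  next
    case (Suc i)
    have lt: "length l - Suc i < length l" using Suc.prems by simp
    have "drop (length l - Suc i) l = l ! (length l - Suc i) # drop (Suc (length l - Suc i)) l"
      using lt by (rule Cons_nth_drop_Suc[symmetric])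
    moreover have "Suc (length l - Suc i) = length l - i" using Suc.prems by simp
    moreover have "lnth (list_encode l) (length l - Suc i) = l ! (length l - Suc i)" using lt by (simp add: lnth_enc)
    ultimately show ?case using Suc by simp
  qed
  from this[of "length l"] show ?thesis by (simp add: san_def llen_enc)
qed

lemma sit_encode_def2: "sit_encode s = list_encode (map (\<lambda>b. if b then 1 else 0) s)"
  by (simp add: sit_encode_def)

lemma san_sit: "san (sit_encode s) = sit_encode s"
proof -
  have "(\<lambda>x::bool. if (if x then 1 else 0::nat) = 0 then 0 else 1::nat) = (\<lambda>b. if b then 1 else 0)" by (rule ext) auto
  then show ?thesis unfolding sit_encode_def san_enc by (simp add: comp_def)
qed

lemma sitdec_sit: "sitdec (sit_encode s) = s"
  unfolding sit_encode_def sitdec_def by (simp add: comp_def)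

lemma sit_san: "sit_encode (sitdec (san c)) = san c"
proof -
  have "san c = list_encode (map (\<lambda>x. if x = 0 then 0 else 1) (list_decode c))"
    by (metis list_decode_inverse san_enc)
  moreover have "(\<lambda>x::nat. if 0 < (if x = 0 then 0 else 1::nat) then 1 else 0::nat) = (\<lambda>x. if x = 0 then 0 else 1)" by (rule ext) auto
  ultimately show ?thesis unfolding sitdec_def sit_encode_def by (simp add: comp_def)
qed

lemma rc_san0: "rcomp 1 (\<lambda>xs. san (xs!0))"
proof (rule rc_recI[where g="\<lambda>ys. Suc (prod_encode (if lnth (ys!2) (llen (ys!2) - Suc (ys!0)) = 0 then 0 else 1, ys!1))"
      and f="\<lambda>xs. 0" and m="\<lambda>xs. llen (xs!0)"])
qed (auto intro!: rc_intros simp: san_def)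

lemma rc_san[rc_intros]: "rcomp k g \<Longrightarrow> rcomp k (\<lambda>xs. san (g xs))"
  by (rule rc_op1[OF rc_san0])

lemma rc_partial_q:
  assumes "recursive_sn_rat q" "rcomp k g" "rcomp k h"
  shows "rcomp k (\<lambda>xs. rat_encode (q (sitdec (san (g xs))) (h xs)))"
proof -
  obtain r where r: "\<And>d n. rec_eval r [sit_encode d, n] (rat_encode (q d n))"
    using assms(1) unfolding recursive_sn_rat_def by blast
  have s: "rcomp k (\<lambda>xs. san (g xs))" using assms(2) by (intro rc_intros)
  obtain r1 where r1: "\<forall>xs. length xs = k \<longrightarrow> rec_eval r1 xs (san (g xs))" using s unfolding rcomp_def by blast
  obtain r2 where r2: "\<forall>xs. length xs = k \<longrightarrow> rec_eval r2 xs (h xs)" using assms(3) unfolding rcomp_def by blast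
  have "rec_eval (Cn r [r1, r2]) xs (rat_encode (q (sitdec (san (g xs))) (h xs)))" if "length xs = k" for xs
  proof (rule rec_eval.comp[where ys="[san (g xs), h xs]"])
    show "list_all2 (\<lambda>g y. rec_eval g xs y) [r1, r2] [san (g xs), h xs]" using r1 r2 that by simp
    show "rec_eval r [san (g xs), h xs] (rat_encode (q (sitdec (san (g xs))) (h xs)))"
      using r[of "sitdec (san (g xs))" "h xs"] by (simp add: sit_san)
  qed
  then show ?thesis unfolding rcomp_def by blast
qed

lemma recursive_snI:
  assumes "rcomp 2 F" "\<And>d n. F [sit_encode d, n] = rat_encode (q d n)"
  shows "recursive_sn_rat q"
proof -
  obtain r where "\<forall>xs. length xs = 2 \<longrightarrow> rec_eval r xs (F xs)" using assms(1) unfolding rcomp_def by blast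
  then have "rec_eval r [sit_encode d, n] (rat_encode (q d n))" for d n
    using assms(2)[of d n] by (metis length_Cons list.size(3) numeral_2_eq_2 One_nat_def)
  then show ?thesis unfolding recursive_sn_rat_def by blast
qed

lemma ltake_sit: "m \<le> length s \<Longrightarrow> ltake m (sit_encode s) = sit_encode (take m s)"
  unfolding sit_encode_def by (simp add: ltake_enc take_map)

lemma llen_sit: "llen (sit_encode s) = length s"
  unfolding sit_encode_def by (simp add: llen_enc)

lemma lnth_sit: "m < length s \<Longrightarrow> lnth (sit_encode s) m = (if s ! m then 1 else 0)"
  unfolding sit_encode_def by (simp add: lnth_enc)


lemma upper_exp_le0:
  fixes f :: "bool \<Rightarrow> real"
  assumes "I \<noteq> {}" "\<And>p. p \<in> I \<Longrightarrow> p * f True + (1 - p) * f False \<le> 0"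
  shows "upper_exp I f \<le> 0"
  unfolding upper_exp_def using assms by (intro cSUP_least) auto

lemma bdd_lin: "I \<subseteq> {0..1} \<Longrightarrow> bdd_above ((\<lambda>p. p * f True + (1 - p) * f False) ` I)" for f :: "bool \<Rightarrow> real"
proof (rule bdd_aboveI2)
  fix p assume "I \<subseteq> {0..1}" "p \<in> I"
  then have p: "0 \<le> p" "p \<le> 1" by auto
  have "p * f True \<le> p * \<bar>f True\<bar>" using p by (intro mult_left_mono) auto
  also have "\<dots> \<le> \<bar>f True\<bar>" using p by (intro mult_left_le_one_le) auto
  finally have 1: "p * f True \<le> \<bar>f True\<bar>" .
  have "(1 - p) * f False \<le> (1 - p) * \<bar>f False\<bar>" using p by (intro mult_left_mono) auto
  also have "\<dots> \<le> \<bar>f False\<bar>" using p by (intro mult_left_le_one_le) auto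
  finally have 2: "(1 - p) * f False \<le> \<bar>f False\<bar>" .
  show "p * f True + (1 - p) * f False \<le> \<bar>f True\<bar> + \<bar>f False\<bar>" using 1 2 by linarith
qed

lemma upper_exp_ge:
  fixes f :: "bool \<Rightarrow> real"
  assumes "p \<in> I" "I \<subseteq> {0..1}"
  shows "p * f True + (1 - p) * f False \<le> upper_exp I f"
  unfolding upper_exp_def using assms bdd_lin[OF assms(2)] by (intro cSUP_upper) auto

lemma upper_exp_mono:
  fixes f :: "bool \<Rightarrow> real"
  assumes "I \<noteq> {}" "I \<subseteq> K" "K \<subseteq> {0..1}"
  shows "upper_exp I f \<le> upper_exp K f"
  unfolding upper_exp_def using assms bdd_lin[OF assms(3)] by (intro cSUP_subset_mono) auto

lemma ts_mono:
  assumes "\<And>s. \<phi>1 s \<noteq> {} \<and> \<phi>1 s \<subseteq> \<phi>2 s \<and> \<phi>2 s \<subseteq> {0..1}" "test_supermartingale \<phi>2 T"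
  shows "test_supermartingale \<phi>1 T"
  using assms(2) unfolding test_supermartingale_def
  using upper_exp_mono assms(1) by (meson order_trans)

lemma ml_mono:
  assumes "\<And>s. \<phi>1 s \<noteq> {} \<and> \<phi>1 s \<subseteq> \<phi>2 s \<and> \<phi>2 s \<subseteq> {0..1}" "mlrandom \<phi>1 \<omega>"
  shows "mlrandom \<phi>2 \<omega>"
  using assms ts_mono unfolding mlrandom_def by blast

lemma interval_forecast_iff: "interval_forecast I \<longleftrightarrow> (\<exists>a b. 0 \<le> a \<and> a \<le> b \<and> b \<le> 1 \<and> I = {a..b})"
  by (simp add: interval_forecast_def)

lemma precise_single:
  assumes "forecasting_system \<phi>" "precise_fc \<phi>"
  shows "\<phi> s = {lower_fc \<phi> s}" "0 \<le> lower_fc \<phi> s" "lower_fc \<phi> s \<le> 1"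
proof -
  obtain a b where ab: "0 \<le> a" "a \<le> b" "b \<le> 1" "\<phi> s = {a..b}"
    using assms(1) unfolding forecasting_system_def interval_forecast_def by blast
  have "lower_fc \<phi> s = a" "upper_fc \<phi> s = b" using ab by (auto simp: lower_fc_def upper_fc_def)
  moreover have "lower_fc \<phi> s = upper_fc \<phi> s" using assms(2) unfolding precise_fc_def by blast
  ultimately show "\<phi> s = {lower_fc \<phi> s}" "0 \<le> lower_fc \<phi> s" "lower_fc \<phi> s \<le> 1" using ab by auto
qed

lemma upper_exp_single: "upper_exp {a} f = a * f True + (1 - a) * f False"
  by (simp add: upper_exp_def)

definition xseq :: "(sit \<Rightarrow> real set) \<Rightarrow> path \<Rightarrow> nat \<Rightarrow> real" where
  "xseq \<phi> \<omega> n = lower_fc \<phi> (prefix \<omega> n)"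

definition Lo :: "(sit \<Rightarrow> real set) \<Rightarrow> path \<Rightarrow> real" where
  "Lo \<phi> \<omega> = real_of_ereal (liminf (\<lambda>n. ereal (xseq \<phi> \<omega> n)))"

definition Up :: "(sit \<Rightarrow> real set) \<Rightarrow> path \<Rightarrow> real" where
  "Up \<phi> \<omega> = real_of_ereal (limsup (\<lambda>n. ereal (xseq \<phi> \<omega> n)))"

lemma liminf_props:
  fixes x :: "nat \<Rightarrow> real"
  assumes "\<And>n. 0 \<le> x n" "\<And>n. x n \<le> 1"
  defines "L \<equiv> real_of_ereal (liminf (\<lambda>n. ereal (x n)))"
  defines "U \<equiv> real_of_ereal (limsup (\<lambda>n. ereal (x n)))"
  shows "0 \<le> L" "L \<le> U" "U \<le> 1"
    "\<And>e. e > 0 \<Longrightarrow> \<exists>N. \<forall>n\<ge>N. L - e < x n \<and> x n < U + e"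
    "\<And>c. L < c \<Longrightarrow> \<forall>N. \<exists>n\<ge>N. x n < c"
    "\<And>d. d < U \<Longrightarrow> \<forall>N. \<exists>n\<ge>N. d < x n"
proof -
  let ?li = "liminf (\<lambda>n. ereal (x n))" and ?ls = "limsup (\<lambda>n. ereal (x n))"
  have li0: "0 \<le> ?li" using assms(1) by (intro Liminf_bounded) auto
  have ls1: "?ls \<le> 1" using assms(2) by (intro Limsup_bounded) auto
  have lils: "?li \<le> ?ls" by (rule Liminf_le_Limsup) simp
  have fin: "?li = ereal L" "?ls = ereal U" using li0 ls1 lils unfolding L_def U_def
    by (auto intro!: ereal_real'[symmetric])
  show "0 \<le> L" "L \<le> U" "U \<le> 1" using li0 ls1 lils fin by auto
  show "\<exists>N. \<forall>n\<ge>N. L - e < x n \<and> x n < U + e" if "e > 0" for e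
  proof -
    have "ereal (L - e) < ?li" using fin that by simp
    then have "\<forall>\<^sub>F n in sequentially. ereal (L - e) < ereal (x n)"
      using le_Liminf_iff[of ?li sequentially "\<lambda>n. ereal (x n)"] by blast
    moreover have "?ls < ereal (U + e)" using fin that by simp
    then have "\<forall>\<^sub>F n in sequentially. ereal (x n) < ereal (U + e)"
      using Limsup_le_iff[of sequentially "\<lambda>n. ereal (x n)" ?ls] by blast
    ultimately have "\<forall>\<^sub>F n in sequentially. L - e < x n \<and> x n < U + e"
      by eventually_elim auto
    then show ?thesis unfolding eventually_sequentially by blast
  qed
  show "\<forall>N. \<exists>n\<ge>N. x n < c" if "L < c" for c
  proof -
    have "\<not> ereal c \<le> ?li" using fin that by simp
    then obtain y where y: "y < ereal c" "\<not> (\<forall>\<^sub>F n in sequentially. y < ereal (x n))"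
      using le_Liminf_iff[of "ereal c" sequentially "\<lambda>n. ereal (x n)"] by blast
    then have "\<forall>N. \<exists>n\<ge>N. ereal (x n) \<le> y" unfolding eventually_sequentially by (meson not_less)
    then show ?thesis using y(1)
      by (metis ereal_less_eq(3) le_less_trans less_ereal.simps(1))
  qed
  show "\<forall>N. \<exists>n\<ge>N. d < x n" if "d < U" for d
  proof -
    have "\<not> ?ls \<le> ereal d" using fin that by simp
    then obtain y where y: "y > ereal d" "\<not> (\<forall>\<^sub>F n in sequentially. ereal (x n) < y)"
      using Limsup_le_iff[of sequentially "\<lambda>n. ereal (x n)" "ereal d"] by blast
    then have "\<forall>N. \<exists>n\<ge>N. y \<le> ereal (x n)" unfolding eventually_sequentially by (meson not_less)
    then show ?thesis using y(1)
      by (metis ereal_less_eq(3) less_le_trans less_ereal.simps(1))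
  qed
qed


lemma rp_comp1: assumes "rpred 1 (\<lambda>xs. B (xs!0))" "rcomp k g" shows "rpred k (\<lambda>xs. B (g xs))"
  using rc_op1[of "\<lambda>x. if B x then 1 else 0", OF _ assms(2)] assms(1) unfolding rpred_def by simp

definition prc :: "(sit \<Rightarrow> bool) \<Rightarrow> rat \<Rightarrow> rat \<Rightarrow> sit \<Rightarrow> rat" where
  "prc bet u0 u1 t = (\<Prod>m<length t. if bet (take m t) then (if t ! m then u1 else u0) else 1)"

lemma prc_Nil[simp]: "prc bet u0 u1 [] = 1" by (simp add: prc_def)

lemma prc_snoc: "prc bet u0 u1 (t @ [b]) = prc bet u0 u1 t * (if bet t then (if b then u1 else u0) else 1)"
proof -
  have "(\<Prod>m<length t. if bet (take m (t @ [b])) then (if (t @ [b]) ! m then u1 else u0) else 1) =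
        (\<Prod>m<length t. if bet (take m t) then (if t ! m then u1 else u0) else 1)"
    by (rule prod.cong) (auto simp: nth_append)
  then show ?thesis unfolding prc_def by (simp add: prod.lessThan_Suc nth_append)
qed

lemma prc_nonneg: "0 \<le> u0 \<Longrightarrow> 0 \<le> u1 \<Longrightarrow> 0 \<le> prc bet u0 u1 t"
  unfolding prc_def by (intro prod_nonneg) auto

lemma prc_rec:
  assumes B: "rpred 1 (\<lambda>xs. B (xs!0))" "\<And>t. B (sit_encode t) = bet t"
  shows "recursive_sn_rat (\<lambda>d n. prc bet u0 u1 d)"
proof (rule recursive_snI)
  let ?g = "\<lambda>ys. rmul (ys!1) (if B (ltake (ys!0) (ys!2)) then (if lnth (ys!2) (ys!0) = 0 then rat_encode u0 else rat_encode u1) else rat_encode 1)"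
  let ?F = "\<lambda>xs. rec_nat (rat_encode 1) (\<lambda>n y. ?g (n # y # xs)) (llen (xs!0))"
  show "rcomp 2 ?F"
  proof (rule rc_recI[where g="?g"])
    show "rcomp (Suc (Suc 2)) ?g"
      by (intro rc_intros rp_comp1[OF B(1)]) auto
  qed (auto intro!: rc_intros)
  fix d :: sit and n :: nat
  have "m \<le> length d \<Longrightarrow> rec_nat (rat_encode 1) (\<lambda>i y. ?g (i # y # [sit_encode d, n])) m =
      rat_encode (\<Prod>i<m. if bet (take i d) then (if d ! i then u1 else u0) else 1)" for m
  proof (induct m)
    case 0 then show ?case by simp
  next
    case (Suc m)
    then have m: "m < length d" by simp
    have "(if B (ltake m (sit_encode d)) then (if lnth (sit_encode d) m = 0 then rat_encode u0 else rat_encode u1) else rat_encode 1)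
        = rat_encode (if bet (take m d) then (if d ! m then u1 else u0) else 1)"
      using m by (simp add: ltake_sit lnth_sit B(2))
    moreover have "rec_nat (rat_encode 1) (\<lambda>i y. ?g (i # y # [sit_encode d, n])) (Suc m) =
       rmul (rec_nat (rat_encode 1) (\<lambda>i y. ?g (i # y # [sit_encode d, n])) m)
          (if B (ltake m (sit_encode d)) then (if lnth (sit_encode d) m = 0 then rat_encode u0 else rat_encode u1) else rat_encode 1)"
      by (simp add: numeral_2_eq_2)
    ultimately show ?case using Suc by (simp only: rmul_enc prod.lessThan_Suc)
  qed
  from this[of "length d"] show "?F [sit_encode d, n] = rat_encode (prc bet u0 u1 d)"
    by (simp add: llen_sit prc_def)
qed

lemma prc_lsc:
  assumes "rpred 1 (\<lambda>xs. B (xs!0))" "\<And>t. B (sit_encode t) = bet t"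
  shows "lower_semicomputable (\<lambda>s. real_of_rat (prc bet u0 u1 s))"
  unfolding lower_semicomputable_def
  by (rule exI[of _ "\<lambda>d n. prc bet u0 u1 d"]) (simp add: prc_rec[OF assms])

lemma prc_test:
  assumes "0 \<le> u0" "0 \<le> u1" "\<And>s. \<Phi> s \<noteq> {}"
    "\<And>s p. bet s \<Longrightarrow> p \<in> \<Phi> s \<Longrightarrow> p * (real_of_rat u1 - 1) + (1 - p) * (real_of_rat u0 - 1) \<le> 0"
  shows "test_supermartingale \<Phi> (\<lambda>s. real_of_rat (prc bet u0 u1 s))"
  unfolding test_supermartingale_def
proof (intro conjI allI)
  fix s
  show "0 \<le> real_of_rat (prc bet u0 u1 s)" using prc_nonneg[OF assms(1,2)] by simp
  let ?T = "real_of_rat (prc bet u0 u1 s)"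
  have T0: "0 \<le> ?T" using prc_nonneg[OF assms(1,2)] by simp
  show "upper_exp (\<Phi> s) (\<lambda>x. real_of_rat (prc bet u0 u1 (s @ [x])) - real_of_rat (prc bet u0 u1 s)) \<le> 0"
  proof (rule upper_exp_le0[OF assms(3)])
    fix p assume p: "p \<in> \<Phi> s"
    show "p * (real_of_rat (prc bet u0 u1 (s @ [True])) - ?T) + (1 - p) * (real_of_rat (prc bet u0 u1 (s @ [False])) - ?T) \<le> 0"
    proof (cases "bet s")
      case True
      have "p * (real_of_rat (prc bet u0 u1 (s @ [True])) - ?T) + (1 - p) * (real_of_rat (prc bet u0 u1 (s @ [False])) - ?T)
          = ?T * (p * (real_of_rat u1 - 1) + (1 - p) * (real_of_rat u0 - 1))"
        using True by (simp add: prc_snoc of_rat_mult algebra_simps)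
      also have "\<dots> \<le> 0" using T0 assms(4)[OF True p] by (simp add: mult_nonneg_nonpos)
      finally show ?thesis .
    next
      case False then show ?thesis by (simp add: prc_snoc)
    qed
  qed
qed simp


lemma limsup_fin_bound:
  assumes "limsup (\<lambda>n. ereal (X n)) \<noteq> \<infinity>"
  shows "\<exists>M N. \<forall>n\<ge>N. X n < M"
proof -
  let ?l = "limsup (\<lambda>n. ereal (X n))"
  obtain M where M: "?l < ereal M"
  proof (cases ?l)
    case (real r) then show ?thesis using that[of "r + 1"] by simp
  next
    case PInf then show ?thesis using assms by simp
  next
    case MInf then show ?thesis using that[of 0] by simp
  qed
  have "\<forall>\<^sub>F n in sequentially. ereal (X n) < ereal M"
    using Limsup_le_iff[of sequentially "\<lambda>n. ereal (X n)" ?l] M by blast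
  then show ?thesis unfolding eventually_sequentially by auto
qed

lemma ml_bound:
  assumes "mlrandom \<Phi> \<omega>" "lower_semicomputable T" "test_supermartingale \<Phi> T"
  shows "\<exists>M N. \<forall>n\<ge>N. T (prefix \<omega> n) < M"
proof -
  have "limsup (\<lambda>n. ereal (T (prefix \<omega> n))) \<noteq> \<infinity>" using assms unfolding mlrandom_def by blast
  from limsup_fin_bound[OF this] show ?thesis .
qed

lemma prefix_Suc: "prefix \<omega> (Suc n) = prefix \<omega> n @ [\<omega> n]"
  by (simp add: prefix_def)

lemma prefix_0[simp]: "prefix \<omega> 0 = []"
  by (simp add: prefix_def)

lemma core_contra:
  fixes TA TB :: "nat \<Rightarrow> real"
  assumes "\<forall>n\<ge>NA. TA n < MA" "\<forall>n\<ge>NB. TB n < MB" "\<And>n. 0 \<le> TA n" "\<And>n. 0 \<le> TB n"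
    "TA 0 * TB 0 = 1"
    "\<And>n. TA n * TB n * (if P n then 1 + \<gamma> else 1) \<le> TA (Suc n) * TB (Suc n)" "\<gamma> > 0" "\<And>N. \<exists>n\<ge>N. P n"
  shows False
proof -
  define cnt where "cnt n = card {m. m < n \<and> P m}" for n
  have cS: "cnt (Suc n) = cnt n + (if P n then 1 else 0)" for n
  proof -
    have "{m. m < Suc n \<and> P m} = (if P n then insert n {m. m < n \<and> P m} else {m. m < n \<and> P m})"
      by (auto simp: less_Suc_eq)
    then show ?thesis unfolding cnt_def by auto
  qed
  have mono: "cnt n \<le> cnt m" if "n \<le> m" for n m
    unfolding cnt_def by (rule card_mono) (use that in auto)
  have grow: "1 + \<gamma> * cnt n \<le> TA n * TB n" for n
  proof (induct n)
    case 0 then show ?case using assms(5) by (simp add: cnt_def)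
  next
    case (Suc n)
    show ?case
    proof (cases "P n")
      case True
      have "1 + \<gamma> * cnt (Suc n) = (1 + \<gamma> * cnt n) + \<gamma>" using True cS by (simp add: algebra_simps)
      also have "\<dots> \<le> (1 + \<gamma> * cnt n) * (1 + \<gamma>)" using assms(7) by (simp add: algebra_simps)
      also have "\<dots> \<le> TA n * TB n * (1 + \<gamma>)" using Suc assms(7) by (intro mult_right_mono) auto
      also have "\<dots> \<le> TA (Suc n) * TB (Suc n)" using assms(6)[of n] True by simp
      finally show ?thesis .
    next
      case False
      then show ?thesis using Suc cS[of n] assms(6)[of n] by simp
    qed
  qed
  have unb: "\<exists>n. K \<le> cnt n" for K
  proof (induct K)
    case 0 then show ?case by simp
  next
    case (Suc K)
    then obtain n where n: "K \<le> cnt n" by blast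
    obtain m where m: "m \<ge> n" "P m" using assms(8) by blast
    have "cnt n \<le> cnt m" using mono m by simp
    then have "Suc K \<le> cnt (Suc m)" using cS[of m] m n by simp
    then show ?case by blast
  qed
  obtain K :: nat where K: "MA * MB / \<gamma> < K" using reals_Archimedean2 by blast
  obtain n0 where n0: "K \<le> cnt n0" using unb by blast
  define n where "n = max n0 (max NA NB)"
  have "K \<le> cnt n" using n0 mono[of n0 n] by (simp add: n_def)
  then have "\<gamma> * K \<le> \<gamma> * cnt n" using assms(7) by simp
  moreover have "MA * MB < \<gamma> * K" using K assms(7) by (simp add: field_simps)
  ultimately have big: "MA * MB < TA n * TB n" using grow[of n] by linarith
  have a: "TA n < MA" "TB n < MB" using assms(1,2) by (auto simp: n_def)
  have "TA n * TB n \<le> TA n * MB" using a assms(3)[of n] by (intro mult_left_mono) auto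
  also have "\<dots> \<le> MA * MB" using a assms(4)[of n] by (intro mult_right_mono) auto
  finally show False using big by simp
qed

lemma fac_nonneg:
  fixes e s z :: rat
  assumes "0 \<le> e" "e \<le> 1/2" "\<bar>z\<bar> \<le> 1" "\<bar>s\<bar> = 1"
  shows "0 \<le> 1 + e * s * z"
proof -
  have "\<bar>e * s * z\<bar> = e * \<bar>z\<bar>" using assms by (simp add: abs_mult)
  also have "\<dots> \<le> e" using assms by (simp add: mult_left_le)
  finally show ?thesis using assms by (simp add: abs_le_iff)
qed

lemma fac_prod:
  fixes sg kap r bb :: rat
  assumes "sg * sg = 1" "0 \<le> kap" "kap \<le> 1" "0 \<le> r" "r \<le> 1" "bb = 0 \<or> bb = 1"
  defines "e \<equiv> sg * (kap - r) / 2"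
  shows "1 + e * e \<le> (1 + e * sg * (kap - bb)) * (1 + e * sg * (bb - r))"
proof -
  have ex: "(1 + e * sg * (kap - bb)) * (1 + e * sg * (bb - r)) = 1 + e * sg * (kap - r) + e * e * (sg * sg) * ((kap - bb) * (bb - r))"
    by (simp add: algebra_simps)
  have es: "e * sg * (kap - r) = 2 * (e * e)"
    unfolding e_def by (simp add: field_simps)
  have "-1 \<le> (kap - bb) * (bb - r)"
  proof (cases "bb = 0")
    case True
    have "kap * r \<le> 1" using assms by (simp add: mult_le_one)
    then show ?thesis using True by simp
  next
    case False
    then have "bb = 1" using assms(6) by simp
    have "(1 - kap) * (1 - r) \<le> 1" using assms by (intro mult_le_one) auto
    then show ?thesis using \<open>bb = 1\<close> by (simp add: algebra_simps)
  qed
  then have "- (e * e) \<le> e * e * ((kap - bb) * (bb - r))"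
    using mult_left_mono[of "-1" "(kap - bb) * (bb - r)" "e * e"] by simp
  then show ?thesis unfolding ex es using assms(1) by simp
qed


lemma rat_between: "(x::real) < y \<Longrightarrow> \<exists>q::rat. x < of_rat q \<and> of_rat q < y"
  by (metis Rats_cases Rats_dense_in_real)

lemma sg_cases: "sg = 1 \<or> sg = -1 \<Longrightarrow> (sg::rat) * sg = 1 \<and> \<bar>sg\<bar> = 1"
  by auto

lemma bet_contra:
  fixes sg th r kap :: rat and k :: nat and q :: "sit \<Rightarrow> nat \<Rightarrow> rat" and J :: "real set"
  assumes fs: "forecasting_system \<phi>" and pr: "precise_fc \<phi>"
    and rq: "recursive_sn_rat q" and apx: "\<And>d n. \<bar>lower_fc \<phi> d - real_of_rat (q d n)\<bar> < (1/2)^n"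
    and ml: "mlrandom \<phi> \<omega>" and mlJ: "mlrandom (\<lambda>_. J) \<omega>" and Jne: "J \<noteq> {}"
    and sg: "sg = 1 \<or> sg = -1"
    and h1: "0 \<le> kap" "kap \<le> 1" "0 \<le> r" "r \<le> 1"
    and h2: "\<And>p. p \<in> J \<Longrightarrow> real_of_rat sg * (real_of_rat kap - p) \<le> 0"
    and h3: "real_of_rat (sg * (th - r)) + (1/2)^k \<le> 0"
    and h4: "0 < sg * (kap - r)"
    and h5: "\<And>N. \<exists>n\<ge>N. real_of_rat sg * xseq \<phi> \<omega> n + (1/2)^k \<le> real_of_rat (sg * th)"
  shows False
proof -
  define e where "e = sg * (kap - r) / 2"
  define bet where "bet t = (sg * q t k \<le> sg * th)" for t
  define B where "B c = rle (rmul (rat_encode sg) (rat_encode (q (sitdec (san c)) k))) (rat_encode (sg * th))" for c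
  have Brp: "rpred 1 (\<lambda>xs. B (xs!0))" unfolding B_def by (auto intro!: rc_intros rc_partial_q[OF rq])
  have Beq: "B (sit_encode t) = bet t" for t unfolding B_def bet_def by (simp add: san_sit sitdec_sit rmul_enc rle_enc)
  have sgs: "sg * sg = 1" "\<bar>sg\<bar> = 1" using sg_cases[OF sg] by auto
  have e0: "0 < e" using h4 by (simp add: e_def)
  have "\<bar>kap - r\<bar> \<le> 1" using h1 by (simp add: abs_le_iff)
  then have e12: "e \<le> 1/2" unfolding e_def using sgs abs_ge_self[of "sg * (kap - r)"] by (simp add: abs_mult)
  define a0 where "a0 = 1 + e * sg * (kap - 0)"
  define a1 where "a1 = 1 + e * sg * (kap - 1)"
  define b0 where "b0 = 1 + e * sg * (0 - r)"
  define b1 where "b1 = 1 + e * sg * (1 - r)"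
  have nn: "0 \<le> a0" "0 \<le> a1" "0 \<le> b0" "0 \<le> b1" unfolding a0_def a1_def b0_def b1_def
    by (rule fac_nonneg; use h1 e0 e12 sgs in \<open>auto simp: abs_le_iff\<close>)+
  define TA where "TA s = real_of_rat (prc bet a0 a1 s)" for s
  define TB where "TB s = real_of_rat (prc bet b0 b1 s)" for s
  have tA: "test_supermartingale (\<lambda>_. J) TA" unfolding TA_def
  proof (rule prc_test[OF nn(1,2) Jne])
    fix s p assume "bet s" "p \<in> J"
    have "p * (real_of_rat a1 - 1) + (1 - p) * (real_of_rat a0 - 1) = real_of_rat e * (real_of_rat sg * (real_of_rat kap - p))"
      by (simp add: a0_def a1_def of_rat_add of_rat_mult of_rat_diff algebra_simps)
    also have "\<dots> \<le> 0" using h2[OF \<open>p \<in> J\<close>] e0 by (simp add: mult_nonneg_nonpos)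
    finally show "p * (real_of_rat a1 - 1) + (1 - p) * (real_of_rat a0 - 1) \<le> 0" .
  qed
  have tB: "test_supermartingale \<phi> TB" unfolding TB_def
  proof (rule prc_test[OF nn(3,4)])
    show "\<phi> s \<noteq> {}" for s using precise_single(1)[OF fs pr] by simp
    fix s p assume bs: "bet s" and p: "p \<in> \<phi> s"
    then have pa: "p = lower_fc \<phi> s" using precise_single(1)[OF fs pr] by simp
    have "p * (real_of_rat b1 - 1) + (1 - p) * (real_of_rat b0 - 1) = real_of_rat e * (real_of_rat sg * (p - real_of_rat r))"
      by (simp add: b0_def b1_def of_rat_add of_rat_mult of_rat_diff algebra_simps)
    also have "\<dots> \<le> 0"
    proof -
      have bq: "real_of_rat sg * real_of_rat (q s k) \<le> real_of_rat sg * real_of_rat th"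
        using bs unfolding bet_def by (metis of_rat_less_eq of_rat_mult)
      have a: "\<bar>p - real_of_rat (q s k)\<bar> < (1/2)^k" using apx[of s k] pa by simp
      have "real_of_rat sg * (p - real_of_rat r) \<le> 0"
        using sg bq a h3 by (auto simp: of_rat_mult of_rat_diff abs_less_iff)
      then show ?thesis using e0 by (simp add: mult_nonneg_nonpos)
    qed
    finally show "p * (real_of_rat b1 - 1) + (1 - p) * (real_of_rat b0 - 1) \<le> 0" .
  qed
  have lA: "lower_semicomputable TA" unfolding TA_def by (rule prc_lsc[OF Brp Beq])
  have lB: "lower_semicomputable TB" unfolding TB_def by (rule prc_lsc[OF Brp Beq])
  obtain MA NA where MA: "\<forall>n\<ge>NA. TA (prefix \<omega> n) < MA" using ml_bound[OF mlJ lA tA] by blast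
  obtain MB NB where MB: "\<forall>n\<ge>NB. TB (prefix \<omega> n) < MB" using ml_bound[OF ml lB tB] by blast
  show False
  proof (rule core_contra[where TA="\<lambda>n. TA (prefix \<omega> n)" and TB="\<lambda>n. TB (prefix \<omega> n)"
        and P="\<lambda>n. bet (prefix \<omega> n)" and \<gamma>="real_of_rat (e * e)", OF MA MB])
    show "0 \<le> TA (prefix \<omega> n)" "0 \<le> TB (prefix \<omega> n)" for n
      unfolding TA_def TB_def using prc_nonneg nn by auto
    show "TA (prefix \<omega> 0) * TB (prefix \<omega> 0) = 1" by (simp add: TA_def TB_def)
    show "0 < real_of_rat (e * e)" using e0 by simp
    show "\<exists>n\<ge>N. bet (prefix \<omega> n)" for N
    proof -
      obtain n where n: "n \<ge> N" "real_of_rat sg * xseq \<phi> \<omega> n + (1/2)^k \<le> real_of_rat (sg * th)" using h5 by blast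
      have a: "\<bar>xseq \<phi> \<omega> n - real_of_rat (q (prefix \<omega> n) k)\<bar> < (1/2)^k" using apx by (simp add: xseq_def)
      have "real_of_rat (sg * q (prefix \<omega> n) k) \<le> real_of_rat (sg * th)"
        using sg n(2) a by (auto simp: of_rat_mult abs_less_iff)
      then show ?thesis using n(1) unfolding bet_def of_rat_less_eq by blast
    qed
    fix n
    let ?p = "prefix \<omega> n" and ?b = "\<omega> n"
    define bb where "bb = (if ?b then 1 else 0::rat)"
    have fa: "(if ?b then a1 else a0) = 1 + e * sg * (kap - bb)" by (simp add: bb_def a0_def a1_def)
    have fb: "(if ?b then b1 else b0) = 1 + e * sg * (bb - r)" by (simp add: bb_def b0_def b1_def)
    have fp: "1 + e * e \<le> (if ?b then a1 else a0) * (if ?b then b1 else b0)"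
      unfolding fa fb e_def using fac_prod[OF sgs(1) h1, of bb] by (simp add: bb_def)
    have PP: "0 \<le> prc bet a0 a1 ?p * prc bet b0 b1 ?p" using prc_nonneg nn by simp
    have "prc bet a0 a1 ?p * prc bet b0 b1 ?p * (if bet ?p then 1 + e * e else 1) \<le>
          prc bet a0 a1 (prefix \<omega> (Suc n)) * prc bet b0 b1 (prefix \<omega> (Suc n))"
    proof (cases "bet ?p")
      case True
      have "prc bet a0 a1 ?p * prc bet b0 b1 ?p * (1 + e * e) \<le>
          prc bet a0 a1 ?p * prc bet b0 b1 ?p * ((if ?b then a1 else a0) * (if ?b then b1 else b0))"
        using fp PP by (rule mult_left_mono)
      then show ?thesis using True by (simp add: prefix_Suc prc_snoc algebra_simps)
    next
      case False then show ?thesis by (simp add: prefix_Suc prc_snoc)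
    qed
    then have "real_of_rat (prc bet a0 a1 ?p * prc bet b0 b1 ?p * (if bet ?p then 1 + e * e else 1)) \<le>
          real_of_rat (prc bet a0 a1 (prefix \<omega> (Suc n)) * prc bet b0 b1 (prefix \<omega> (Suc n)))"
      by (simp only: of_rat_less_eq)
    then show "TA ?p * TB ?p * (if bet ?p then 1 + real_of_rat (e * e) else 1) \<le> TA (prefix \<omega> (Suc n)) * TB (prefix \<omega> (Suc n))"
      unfolding TA_def TB_def by (simp add: of_rat_mult of_rat_add split: if_splits)
  qed
qed


lemma of_rat_half_pow: "real_of_rat ((1/2)^k) = (1/2)^k"
  by (simp add: of_rat_power of_rat_divide)

lemma part_i:
  assumes fs: "forecasting_system \<phi>" and comp: "computable_fc \<phi>" and pr: "precise_fc \<phi>" and ml: "mlrandom \<phi> \<omega>"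
    and cd: "0 \<le> c" "c \<le> d" "d \<le> 1" and mlJ: "mlrandom (\<lambda>_. {c..d}) \<omega>"
  shows "c \<le> Lo \<phi> \<omega> \<and> Up \<phi> \<omega> \<le> d"
proof -
  obtain q where rq: "recursive_sn_rat q" and apx: "\<And>d n. \<bar>lower_fc \<phi> d - real_of_rat (q d n)\<bar> < (1/2)^n"
    using comp unfolding computable_fc_def computable_real_def by blast
  define L where "L = Lo \<phi> \<omega>"
  define U where "U = Up \<phi> \<omega>"
  have xb: "0 \<le> xseq \<phi> \<omega> n" "xseq \<phi> \<omega> n \<le> 1" for n
    using precise_single[OF fs pr] by (auto simp: xseq_def)
  note lp = liminf_props[of "xseq \<phi> \<omega>", OF xb, folded Lo_def Up_def, folded L_def U_def]
  have Jne: "{c..d} \<noteq> {}" using cd by simp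
  have "c \<le> L"
  proof (rule ccontr)
    assume "\<not> c \<le> L"
    define \<delta> where "\<delta> = (c - L) / 4"
    have d0: "\<delta> > 0" using \<open>\<not> c \<le> L\<close> by (simp add: \<delta>_def)
    obtain k where k: "(1/2::real)^k < \<delta>" using real_arch_pow_inv[OF d0, of "1/2"] by auto
    obtain th :: rat where th: "L + 2*\<delta> < of_rat th" "of_rat th < L + 5*\<delta>/2"
      using rat_between[of "L + 2*\<delta>" "L + 5*\<delta>/2"] d0 by auto
    define r where "r = th + (1/2)^k"
    have rr: "real_of_rat r = real_of_rat th + (1/2)^k" by (simp add: r_def of_rat_add of_rat_half_pow)
    obtain kap :: rat where kap: "c - \<delta>/2 < of_rat kap" "of_rat kap < c"
      using rat_between[of "c - \<delta>/2" c] d0 by auto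
    have cL: "c = L + 4 * \<delta>" by (simp add: \<delta>_def field_simps)
    have pk: "0 < (1/2::real)^k" by simp
    show False
    proof (rule bet_contra[OF fs pr rq apx ml mlJ Jne, of 1 kap r th k])
      have "0 \<le> real_of_rat kap" "real_of_rat kap \<le> 1" "0 \<le> real_of_rat r" "real_of_rat r \<le> 1"
        using th kap rr cL k pk lp(1) cd d0 by linarith+
      then show "0 \<le> kap" "kap \<le> 1" "0 \<le> r" "r \<le> 1" by (simp_all add: zero_le_of_rat_iff)
      show "real_of_rat 1 * (real_of_rat kap - p) \<le> 0" if "p \<in> {c..d}" for p using that kap by simp
      show "real_of_rat (1 * (th - r)) + (1 / 2) ^ k \<le> 0" using rr by (simp add: of_rat_diff)
      have "real_of_rat r < real_of_rat kap" using th kap rr cL k by linarith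
      then show "0 < 1 * (kap - r)" by (simp add: of_rat_less)
      show "\<exists>n\<ge>N. real_of_rat 1 * xseq \<phi> \<omega> n + (1 / 2) ^ k \<le> real_of_rat (1 * th)" for N
      proof -
        obtain n where "n \<ge> N" "xseq \<phi> \<omega> n < L + \<delta>" using lp(5)[of "L + \<delta>"] d0 by auto
        then show ?thesis using th k by (intro exI[of _ n]) auto
      qed
    qed simp
  qed
  moreover have "U \<le> d"
  proof (rule ccontr)
    assume "\<not> U \<le> d"
    define \<delta> where "\<delta> = (U - d) / 4"
    have d0: "\<delta> > 0" using \<open>\<not> U \<le> d\<close> by (simp add: \<delta>_def)
    obtain k where k: "(1/2::real)^k < \<delta>" using real_arch_pow_inv[OF d0, of "1/2"] by auto
    obtain th :: rat where th: "U - 5*\<delta>/2 < of_rat th" "of_rat th < U - 2*\<delta>"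
      using rat_between[of "U - 5*\<delta>/2" "U - 2*\<delta>"] d0 by auto
    define r where "r = th - (1/2)^k"
    have rr: "real_of_rat r = real_of_rat th - (1/2)^k" by (simp add: r_def of_rat_diff of_rat_half_pow)
    obtain kap :: rat where kap: "d < of_rat kap" "of_rat kap < d + \<delta>/2"
      using rat_between[of d "d + \<delta>/2"] d0 by auto
    have dU: "U = d + 4 * \<delta>" by (simp add: \<delta>_def field_simps)
    have pk: "0 < (1/2::real)^k" by simp
    show False
    proof (rule bet_contra[OF fs pr rq apx ml mlJ Jne, of "-1" kap r th k])
      have "0 \<le> real_of_rat kap" "real_of_rat kap \<le> 1" "0 \<le> real_of_rat r" "real_of_rat r \<le> 1"
        using th kap rr dU k pk lp(3) cd d0 by linarith+
      then show "0 \<le> kap" "kap \<le> 1" "0 \<le> r" "r \<le> 1" by (simp_all add: zero_le_of_rat_iff)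
      show "real_of_rat (-1) * (real_of_rat kap - p) \<le> 0" if "p \<in> {c..d}" for p using that kap by simp
      show "real_of_rat (-1 * (th - r)) + (1 / 2) ^ k \<le> 0" using rr by (simp add: of_rat_diff)
      have "real_of_rat kap < real_of_rat r" using th kap rr dU k by linarith
      then show "0 < -1 * (kap - r)" by (simp add: of_rat_less)
      show "\<exists>n\<ge>N. real_of_rat (-1) * xseq \<phi> \<omega> n + (1 / 2) ^ k \<le> real_of_rat (-1 * th)" for N
      proof -
        obtain n where "n \<ge> N" "U - \<delta> < xseq \<phi> \<omega> n" using lp(6)[of "U - \<delta>"] d0 by auto
        then show ?thesis using th k by (intro exI[of _ n]) (auto simp: of_rat_minus)
      qed
    qed simp
  qed
  ultimately show ?thesis by (simp add: L_def U_def)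
qed


lemma limsup_inf_iff:
  "limsup (\<lambda>n. ereal (X n)) = \<infinity> \<longleftrightarrow> (\<forall>B N. \<exists>n\<ge>N. B < X n)"
proof
  assume a: "limsup (\<lambda>n. ereal (X n)) = \<infinity>"
  show "\<forall>B N. \<exists>n\<ge>N. B < X n"
  proof (rule ccontr)
    assume "\<not> (\<forall>B N. \<exists>n\<ge>N. B < X n)"
    then obtain B N where "\<forall>n\<ge>N. X n \<le> B" by (auto simp: not_less)
    then have "\<forall>\<^sub>F n in sequentially. ereal (X n) \<le> ereal B" unfolding eventually_sequentially by auto
    then have "limsup (\<lambda>n. ereal (X n)) \<le> ereal B" by (intro Limsup_bounded) auto
    then show False using a by simp
  qed
next
  assume a: "\<forall>B N. \<exists>n\<ge>N. B < X n"
  show "limsup (\<lambda>n. ereal (X n)) = \<infinity>"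
  proof (rule ccontr)
    assume "limsup (\<lambda>n. ereal (X n)) \<noteq> \<infinity>"
    from limsup_fin_bound[OF this] obtain M N where "\<forall>n\<ge>N. X n < M" by blast
    with a show False by (meson less_asym)
  qed
qed

lemma take_snoc_le: "m \<le> length s \<Longrightarrow> take m (s @ [b]) = take m s"
  by simp

context
  fixes \<phi> :: "sit \<Rightarrow> real set" and q :: "sit \<Rightarrow> nat \<Rightarrow> rat" and k N :: nat and al be :: rat
begin

definition pass :: "sit \<Rightarrow> bool" where "pass t \<longleftrightarrow> al \<le> q t k \<and> q t k \<le> be"

definition jj :: "sit \<Rightarrow> nat" where
  "jj s = (LEAST m. N \<le> m \<and> (length s \<le> m \<or> \<not> pass (take m s)))"

definition fr :: "sit \<Rightarrow> sit" where "fr s = take (jj s) s"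

lemma jj_props:
  assumes "N \<le> length s"
  shows "N \<le> jj s" "jj s \<le> length s" "\<And>m. N \<le> m \<Longrightarrow> m < jj s \<Longrightarrow> pass (take m s)"
    "jj s < length s \<Longrightarrow> \<not> pass (take (jj s) s)"
proof -
  let ?P = "\<lambda>m. N \<le> m \<and> (length s \<le> m \<or> \<not> pass (take m s))"
  have Pl: "?P (length s)" using assms by simp
  have Pj: "?P (jj s)" unfolding jj_def by (rule LeastI[of ?P, OF Pl])
  show "N \<le> jj s" using Pj by simp
  show "jj s \<le> length s" unfolding jj_def by (rule Least_le[of ?P, OF Pl])
  show "pass (take m s)" if "N \<le> m" "m < jj s" for m
  proof -
    have "\<not> ?P m" using that(2) unfolding jj_def by (rule not_less_Least)
    moreover have "m < length s" using that \<open>jj s \<le> length s\<close> by simp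
    ultimately show ?thesis using that(1) by simp
  qed
  show "\<not> pass (take (jj s) s)" if "jj s < length s" using Pj that by simp
qed

lemma jj_eqI:
  assumes "N \<le> j" "length s \<le> j \<or> \<not> pass (take j s)" "\<And>m. N \<le> m \<Longrightarrow> m < j \<Longrightarrow> m < length s \<and> pass (take m s)"
  shows "jj s = j"
  unfolding jj_def
proof (rule Least_equality)
  show "N \<le> j \<and> (length s \<le> j \<or> \<not> pass (take j s))" using assms by simp
  fix y assume y: "N \<le> y \<and> (length s \<le> y \<or> \<not> pass (take y s))"
  show "j \<le> y"
  proof (rule ccontr)
    assume "\<not> j \<le> y"
    then have "y < length s \<and> pass (take y s)" using assms(3) y by simp
    then show False using y by simp
  qed
qed

lemma fr_snoc:
  assumes "N \<le> length s"
  shows "jj s < length s \<Longrightarrow> fr (s @ [b]) = fr s"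
    "jj s = length s \<Longrightarrow> pass s \<Longrightarrow> fr (s @ [b]) = s @ [b]"
    "jj s = length s \<Longrightarrow> \<not> pass s \<Longrightarrow> fr (s @ [b]) = s"
proof -
  note jp = jj_props[OF assms]
  show "fr (s @ [b]) = fr s" if "jj s < length s"
  proof -
    have "jj (s @ [b]) = jj s"
    proof (rule jj_eqI)
      show "N \<le> jj s" by (rule jp(1))
      show "length (s @ [b]) \<le> jj s \<or> \<not> pass (take (jj s) (s @ [b]))" using jp(4)[OF that] that by simp
      show "m < length (s @ [b]) \<and> pass (take m (s @ [b]))" if "N \<le> m" "m < jj s" for m
        using jp(3)[OF that] that jp(2) by simp
    qed
    then show ?thesis unfolding fr_def using jp(2) by simp
  qed
  show "fr (s @ [b]) = s @ [b]" if "jj s = length s" "pass s"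
  proof -
    have "jj (s @ [b]) = Suc (length s)"
    proof (rule jj_eqI)
      show "N \<le> Suc (length s)" using assms by simp
      show "length (s @ [b]) \<le> Suc (length s) \<or> \<not> pass (take (Suc (length s)) (s @ [b]))" by simp
      show "m < length (s @ [b]) \<and> pass (take m (s @ [b]))" if "N \<le> m" "m < Suc (length s)" for m
      proof (cases "m = length s")
        case True then show ?thesis using \<open>pass s\<close> by simp
      next
        case False
        then have "m < jj s" using that \<open>jj s = length s\<close> by simp
        then show ?thesis using jp(3)[OF that(1)] that False by simp
      qed
    qed
    then show ?thesis unfolding fr_def by simp
  qed
  show "fr (s @ [b]) = s" if "jj s = length s" "\<not> pass s"
  proof -
    have "jj (s @ [b]) = length s"
    proof (rule jj_eqI)
      show "N \<le> length s" by (rule assms)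
      show "length (s @ [b]) \<le> length s \<or> \<not> pass (take (length s) (s @ [b]))" using that by simp
      show "m < length (s @ [b]) \<and> pass (take m (s @ [b]))" if "N \<le> m" "m < length s" for m
        using jp(3)[of m] that \<open>jj s = length s\<close> by simp
    qed
    then show ?thesis unfolding fr_def by simp
  qed
qed

lemma fr_full: "N \<le> length s \<Longrightarrow> jj s = length s \<Longrightarrow> fr s = s"
  unfolding fr_def by simp

lemma fr_N: "length s = N \<Longrightarrow> fr s = s"
  using jj_props(1,2)[of s] unfolding fr_def by simp

end


lemma part_ii:
  assumes fs: "forecasting_system \<phi>" and comp: "computable_fc \<phi>" and pr: "precise_fc \<phi>" and ml: "mlrandom \<phi> \<omega>"
    and e0: "e > 0"
  shows "mlrandom (\<lambda>_. {Lo \<phi> \<omega> - e..Up \<phi> \<omega> + e} \<inter> {0..1}) \<omega>"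
proof (rule ccontr)
  define L where "L = Lo \<phi> \<omega>"
  define U where "U = Up \<phi> \<omega>"
  define J where "J = {L - e..U + e} \<inter> {0..1::real}"
  assume "\<not> mlrandom (\<lambda>_. {Lo \<phi> \<omega> - e..Up \<phi> \<omega> + e} \<inter> {0..1}) \<omega>"
  then obtain T where lT: "lower_semicomputable T" and tT: "test_supermartingale (\<lambda>_. J) T"
    and infT: "limsup (\<lambda>n. ereal (T (prefix \<omega> n))) = \<infinity>"
    unfolding mlrandom_def J_def L_def U_def by blast
  obtain q where rq: "recursive_sn_rat q" and apx: "\<And>d n. \<bar>lower_fc \<phi> d - real_of_rat (q d n)\<bar> < (1/2)^n"
    using comp unfolding computable_fc_def computable_real_def by blast
  have xb: "0 \<le> xseq \<phi> \<omega> n" "xseq \<phi> \<omega> n \<le> 1" for n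
    using precise_single[OF fs pr] by (auto simp: xseq_def)
  note lp = liminf_props[of "xseq \<phi> \<omega>", OF xb, folded Lo_def Up_def, folded L_def U_def]
  have e8: "e / 8 > 0" using e0 by simp
  obtain k where k: "(1/2::real)^k < e / 8" using real_arch_pow_inv[OF e8, of "1/2"] by auto
  obtain al :: rat where al: "L - 7*e/8 < of_rat al" "of_rat al < L - 5*e/8"
    using rat_between[of "L - 7*e/8" "L - 5*e/8"] e0 by auto
  obtain be :: rat where be: "U + 5*e/8 < of_rat be" "of_rat be < U + 7*e/8"
    using rat_between[of "U + 5*e/8" "U + 7*e/8"] e0 by auto
  obtain N0 where N0: "\<forall>n\<ge>N0. L - e/2 < xseq \<phi> \<omega> n \<and> xseq \<phi> \<omega> n < U + e/2"
    using lp(4)[of "e/2"] e0 by auto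
  define N where "N = Suc N0"
  define S where "S = {s::sit. length s = N}"
  have finS: "finite S" unfolding S_def using finite_lists_length_eq[of "UNIV::bool set" N] by simp
  have T0: "0 \<le> T s" for s using tT unfolding test_supermartingale_def by blast
  define M where "M = sum T S"
  have M0: "0 \<le> M" unfolding M_def using T0 by (simp add: sum_nonneg)
  have TM: "T s \<le> M" if "s \<in> S" for s unfolding M_def using finS that T0 by (intro member_le_sum) auto
  obtain c :: rat where c: "0 < real_of_rat c" "real_of_rat c < 1 / (M + 1)"
    using rat_between[of 0 "1 / (M + 1)"] M0 by auto
  have cT: "real_of_rat c * T s \<le> 1" if "length s = N" for s
  proof -
    have "real_of_rat c * T s \<le> real_of_rat c * M" using TM[of s] that c by (intro mult_left_mono) (auto simp: S_def)
    also have "\<dots> \<le> (1 / (M + 1)) * M" using c M0 by (intro mult_right_mono) auto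
    also have "\<dots> \<le> 1" using M0 by (simp add: field_simps)
    finally show ?thesis .
  qed
  let ?P = "pass q k al be" and ?J = "jj q k N al be" and ?F = "fr q k N al be"
  define T2 where "T2 s = (if length s < N then 1 else real_of_rat c * T (?F s))" for s
  have passJ: "lower_fc \<phi> s \<in> J" if "?P s" for s
  proof -
    have a: "\<bar>lower_fc \<phi> s - real_of_rat (q s k)\<bar> < (1/2)^k" by (rule apx)
    have "real_of_rat al \<le> real_of_rat (q s k)" "real_of_rat (q s k) \<le> real_of_rat be"
      using that unfolding pass_def of_rat_less_eq by auto
    then show ?thesis using a k al be precise_single(2,3)[OF fs pr, of s] unfolding J_def
      by (auto simp: abs_less_iff)
  qed
  have tT2: "test_supermartingale \<phi> T2"
    unfolding test_supermartingale_def
  proof (intro conjI allI)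
    show "T2 [] = 1" by (simp add: T2_def N_def)
    show "0 \<le> T2 s" for s using T0 c by (simp add: T2_def)
    fix s
    define a where "a = lower_fc \<phi> s"
    have a01: "0 \<le> a" "a \<le> 1" using precise_single(2,3)[OF fs pr] by (auto simp: a_def)
    have "a * (T2 (s @ [True]) - T2 s) + (1 - a) * (T2 (s @ [False]) - T2 s) \<le> 0"
    proof (cases "Suc (length s) < N")
      case True then show ?thesis by (simp add: T2_def)
    next
      case F1: False
      show ?thesis
      proof (cases "Suc (length s) = N")
        case True
        have "T2 (s @ [b]) \<le> 1" for b
          using cT[of "s @ [b]"] True fr_N[of "s @ [b]" N q k al be] by (simp add: T2_def)
        moreover have "T2 s = 1" using True by (simp add: T2_def)
        ultimately show ?thesis using a01
          by (metis add_nonpos_nonpos diff_le_0_iff_le diff_ge_0_iff_ge mult_nonneg_nonpos)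
      next
        case False
        then have sN: "N \<le> length s" using F1 by simp
        have T2s: "T2 s = real_of_rat c * T (?F s)" using sN by (simp add: T2_def)
        have T2sb: "T2 (s @ [b]) = real_of_rat c * T (?F (s @ [b]))" for b using sN by (simp add: T2_def)
        note jp = jj_props[where q=q and k=k and al=al and be=be, OF sN]
        show ?thesis
        proof (cases "?J s < length s")
          case True
          then show ?thesis unfolding T2s T2sb fr_snoc(1)[OF sN True] by simp
        next
          case False
          then have jl: "?J s = length s" using jp(2) by simp
          show ?thesis
          proof (cases "?P s")
            case True
            have Fs: "?F s = s" using fr_full[OF sN jl] .
            have "a * (T (s @ [True]) - T s) + (1 - a) * (T (s @ [False]) - T s)
                \<le> upper_exp J (\<lambda>x. T (s @ [x]) - T s)"
              using upper_exp_ge[of a J "\<lambda>x. T (s @ [x]) - T s"] passJ[OF True] unfolding a_def J_def by auto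
            also have "\<dots> \<le> 0" using tT unfolding test_supermartingale_def by blast
            finally have "a * (T (s @ [True]) - T s) + (1 - a) * (T (s @ [False]) - T s) \<le> 0" .
            then have "real_of_rat c * (a * (T (s @ [True]) - T s) + (1 - a) * (T (s @ [False]) - T s)) \<le> 0"
              using c by (simp add: mult_nonneg_nonpos)
            then show ?thesis unfolding T2s T2sb fr_snoc(2)[OF sN jl True] Fs by (simp add: algebra_simps)
          next
            case False
            then show ?thesis unfolding T2s T2sb fr_snoc(3)[OF sN jl False] fr_full[OF sN jl] by simp
          qed
        qed
      qed
    qed
    then show "upper_exp (\<phi> s) (\<lambda>x. T2 (s @ [x]) - T2 s) \<le> 0"
      using precise_single(1)[OF fs pr, of s] by (simp add: upper_exp_single a_def)
  qed
  obtain qT where rqT: "recursive_sn_rat qT" and mqT: "\<And>d n. qT d n \<le> qT d (Suc n)"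
    and cqT: "\<And>d. (\<lambda>n. real_of_rat (qT d n)) \<longlonglongrightarrow> T d"
    using lT unfolding lower_semicomputable_def by blast
  define PC where "PC u = (rle (rat_encode al) (rat_encode (q (sitdec (san u)) k)) \<and> rle (rat_encode (q (sitdec (san u)) k)) (rat_encode be))" for u
  define JC where "JC c0 = (LEAST m. N \<le> m \<and> (llen c0 \<le> m \<or> \<not> PC (ltake m c0)))" for c0
  have PCeq: "PC (sit_encode t) = ?P t" for t unfolding PC_def pass_def by (simp add: san_sit sitdec_sit rle_enc)
  have JCeq: "JC (sit_encode s) = ?J s" for s
  proof -
    have "(N \<le> m \<and> (llen (sit_encode s) \<le> m \<or> \<not> PC (ltake m (sit_encode s)))) = (N \<le> m \<and> (length s \<le> m \<or> \<not> ?P (take m s)))" for m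
      by (cases "length s \<le> m") (auto simp: llen_sit ltake_sit PCeq)
    then show ?thesis unfolding JC_def jj_def by simp
  qed
  have JCrc0: "rcomp 1 (\<lambda>xs. JC (xs!0))"
  proof -
    have "rcomp 1 (\<lambda>xs. LEAST m. (\<lambda>ys. N \<le> ys!0 \<and> (llen (ys!1) \<le> ys!0 \<or> \<not> PC (ltake (ys!0) (ys!1)))) (m # xs))"
    proof (rule rc_least)
      show "rpred (Suc 1) (\<lambda>ys. N \<le> ys!0 \<and> (llen (ys!1) \<le> ys!0 \<or> \<not> PC (ltake (ys!0) (ys!1))))"
        unfolding PC_def by (auto intro!: rc_intros rc_partial_q[OF rq])
      show "\<exists>m. (\<lambda>ys. N \<le> ys!0 \<and> (llen (ys!1) \<le> ys!0 \<or> \<not> PC (ltake (ys!0) (ys!1)))) (m # xs)" for xs :: "nat list"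
        by (rule exI[of _ "N + llen (xs!0)"]) simp
    qed
    then show ?thesis by (rule rc_cong) (simp add: JC_def)
  qed
  define q2 where "q2 d n = (if length d < N then 1 else c * qT (?F d) n)" for d n
  have lT2: "lower_semicomputable T2" unfolding lower_semicomputable_def
  proof (intro exI[of _ q2] conjI allI)
    show "q2 d n \<le> q2 d (Suc n)" for d n
      using mqT c by (simp add: q2_def mult_left_mono zero_less_of_rat_iff)
    show "(\<lambda>n. real_of_rat (q2 d n)) \<longlonglongrightarrow> T2 d" for d
    proof (cases "length d < N")
      case True then show ?thesis by (simp add: q2_def T2_def)
    next
      case False
      then show ?thesis unfolding q2_def T2_def using cqT[of "?F d"]
        by (simp add: of_rat_mult tendsto_mult_left)
    qed
    define F where "F = (\<lambda>xs. if llen (xs!0) < N then rat_encode 1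
        else rmul (rat_encode c) (rat_encode (qT (sitdec (san (ltake (JC (xs!0)) (xs!0)))) (xs!1))))"
    show "recursive_sn_rat q2"
    proof (rule recursive_snI[where F=F])
      show "rcomp 2 F" unfolding F_def
        by (auto intro!: rc_intros rc_partial_q[OF rqT] rc_op1[OF JCrc0])
      fix d n
      show "F [sit_encode d, n] = rat_encode (q2 d n)"
      proof (cases "length d < N")
        case True then show ?thesis by (simp add: F_def llen_sit q2_def)
      next
        case False
        then have "N \<le> length d" by simp
        then have "?J d \<le> length d" by (rule jj_props(2))
        then show ?thesis using False
          by (simp add: F_def llen_sit q2_def JCeq ltake_sit san_sit sitdec_sit rmul_enc fr_def)
      qed
    qed
  qed
  have Fw: "?F (prefix \<omega> n) = prefix \<omega> n" if "N \<le> n" for n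
  proof -
    have "?J (prefix \<omega> n) = length (prefix \<omega> n)"
    proof (rule jj_eqI)
      show "N \<le> length (prefix \<omega> n)" using that by (simp add: prefix_def)
      show "length (prefix \<omega> n) \<le> length (prefix \<omega> n) \<or> \<not> ?P (take (length (prefix \<omega> n)) (prefix \<omega> n))" by simp
      fix m assume m: "N \<le> m" "m < length (prefix \<omega> n)"
      have tk: "take m (prefix \<omega> n) = prefix \<omega> m" using m by (simp add: prefix_def take_map)
      have xm: "L - e/2 < xseq \<phi> \<omega> m \<and> xseq \<phi> \<omega> m < U + e/2" using N0 m(1) by (simp add: N_def)
      have a: "\<bar>xseq \<phi> \<omega> m - real_of_rat (q (prefix \<omega> m) k)\<bar> < (1/2)^k" using apx by (simp add: xseq_def)
      have "real_of_rat al \<le> real_of_rat (q (prefix \<omega> m) k)" "real_of_rat (q (prefix \<omega> m) k) \<le> real_of_rat be"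
        using xm a k al be by (auto simp: abs_less_iff)
      then have "?P (prefix \<omega> m)" unfolding pass_def of_rat_less_eq by simp
      then show "m < length (prefix \<omega> n) \<and> ?P (take m (prefix \<omega> n))" using m tk by simp
    qed
    then show ?thesis using that by (simp add: fr_def prefix_def)
  qed
  have "limsup (\<lambda>n. ereal (T2 (prefix \<omega> n))) = \<infinity>"
    unfolding limsup_inf_iff
  proof (intro allI)
    fix B N'
    obtain n where n: "n \<ge> max N' N" "B / real_of_rat c < T (prefix \<omega> n)"
      using infT unfolding limsup_inf_iff by blast
    have "T2 (prefix \<omega> n) = real_of_rat c * T (prefix \<omega> n)"
      using n(1) Fw[of n] by (simp add: T2_def prefix_def)
    moreover have "B < real_of_rat c * T (prefix \<omega> n)" using n(2) c by (simp add: field_simps)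
    ultimately show "\<exists>n\<ge>N'. B < T2 (prefix \<omega> n)" using n(1) by auto
  qed
  then show False using ml lT2 tT2 unfolding mlrandom_def by blast
qed


lemma clip_eq: "{a..b} \<inter> {0..1::real} = {max 0 a..min 1 b}"
  by auto

lemma clip_if: "0 \<le> c \<Longrightarrow> c \<le> d \<Longrightarrow> d \<le> 1 \<Longrightarrow> e > 0 \<Longrightarrow> interval_forecast ({c - e..d + e} \<inter> {0..1})"
  unfolding clip_eq interval_forecast_def
  by (rule exI[of _ "max 0 (c - e)"], rule exI[of _ "min 1 (d + e)"]) auto

theorem proposition4:
  fixes \<phi> :: "bool list \<Rightarrow> real set" and \<omega> :: "nat \<Rightarrow> bool"
  assumes "forecasting_system \<phi>" and "computable_fc \<phi>" and "precise_fc \<phi>"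
    and "mlrandom \<phi> \<omega>"
  shows "interval_forecast (I_mlr \<omega>) \<and> almost_mlrandom (I_mlr \<omega>) \<omega> \<and>
         (\<forall>I. interval_forecast I \<and> almost_mlrandom I \<omega> \<longrightarrow> I_mlr \<omega> \<subseteq> I)"
proof -
  define L where "L = Lo \<phi> \<omega>"
  define U where "U = Up \<phi> \<omega>"
  have xb: "0 \<le> xseq \<phi> \<omega> n" "xseq \<phi> \<omega> n \<le> 1" for n
    using precise_single[OF assms(1,3)] by (auto simp: xseq_def)
  note lp = liminf_props[of "xseq \<phi> \<omega>", OF xb, folded Lo_def Up_def, folded L_def U_def]
  have LU: "0 \<le> L" "L \<le> U" "U \<le> 1" using lp by auto
  have pii: "mlrandom (\<lambda>_. {L - e..U + e} \<inter> {0..1}) \<omega>" if "e > 0" for e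
    using part_ii[OF assms that] by (simp add: L_def U_def)
  have pi: "c \<le> L \<and> U \<le> d" if "0 \<le> c" "c \<le> d" "d \<le> 1" "mlrandom (\<lambda>_. {c..d}) \<omega>" for c d
    using part_i[OF assms that] by (simp add: L_def U_def)
  have Imlr: "I_mlr \<omega> = {L..U}"
  proof
    show "I_mlr \<omega> \<subseteq> {L..U}"
    proof
      fix x assume x: "x \<in> I_mlr \<omega>"
      have "L - e \<le> x \<and> x \<le> U + e" if "e > 0" for e
      proof -
        have "interval_forecast ({L - e..U + e} \<inter> {0..1})" using clip_if[OF LU that] .
        with pii[OF that] x have "x \<in> {L - e..U + e} \<inter> {0..1}" unfolding I_mlr_def by blast
        then show ?thesis by auto
      qed
      then have "L \<le> x" "x \<le> U"
        by (metis add.commute add_le_cancel_left diff_le_eq field_le_epsilon)+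
      then show "x \<in> {L..U}" by simp
    qed
    show "{L..U} \<subseteq> I_mlr \<omega>"
    proof
      fix x assume x: "x \<in> {L..U}"
      show "x \<in> I_mlr \<omega>" unfolding I_mlr_def
      proof
        fix I assume "I \<in> {I. interval_forecast I \<and> mlrandom (\<lambda>_. I) \<omega>}"
        then obtain c d where cd: "0 \<le> c" "c \<le> d" "d \<le> 1" "I = {c..d}" "mlrandom (\<lambda>_. I) \<omega>"
          unfolding interval_forecast_def by blast
        then show "x \<in> I" using pi[of c d] x by auto
      qed
    qed
  qed
  have c1: "interval_forecast (I_mlr \<omega>)" unfolding Imlr interval_forecast_def using LU by blast
  have c2: "almost_mlrandom (I_mlr \<omega>) \<omega>" unfolding almost_mlrandom_def Imlr
  proof (intro allI impI)
    fix e1 e2 :: real assume e: "0 < e1" "0 < e2"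
    have IS: "Inf {L..U} = L" "Sup {L..U} = U" using LU by auto
    define e where "e = min e1 e2"
    have "e > 0" using e by (simp add: e_def)
    show "mlrandom (\<lambda>_. {Inf {L..U} - e1..Sup {L..U} + e2} \<inter> {0..1}) \<omega>"
      unfolding IS
    proof (rule ml_mono[OF _ pii[OF \<open>e > 0\<close>]])
      fix s :: sit
      show "{L - e..U + e} \<inter> {0..1} \<noteq> {} \<and> {L - e..U + e} \<inter> {0..1} \<subseteq> {L - e1..U + e2} \<inter> {0..1} \<and>
          {L - e1..U + e2} \<inter> {0..1} \<subseteq> {0..1}"
        using LU \<open>e > 0\<close> by (auto simp: e_def intro!: exI[of _ L])
    qed
  qed
  have c3: "\<forall>I. interval_forecast I \<and> almost_mlrandom I \<omega> \<longrightarrow> I_mlr \<omega> \<subseteq> I"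
  proof (intro allI impI)
    fix I assume I: "interval_forecast I \<and> almost_mlrandom I \<omega>"
    then obtain c d where cd: "0 \<le> c" "c \<le> d" "d \<le> 1" "I = {c..d}" unfolding interval_forecast_def by blast
    have IS: "Inf I = c" "Sup I = d" using cd by auto
    have "c - e \<le> L \<and> U \<le> d + e" if "e > 0" for e
    proof -
      have "mlrandom (\<lambda>_. {c - e..d + e} \<inter> {0..1}) \<omega>"
        using I that unfolding almost_mlrandom_def IS by blast
      then have "mlrandom (\<lambda>_. {max 0 (c - e)..min 1 (d + e)}) \<omega>" by (metis clip_eq)
      then have "max 0 (c - e) \<le> L \<and> U \<le> min 1 (d + e)"
        using pi[of "max 0 (c - e)" "min 1 (d + e)"] cd that by auto
      then show ?thesis by auto
    qed
    then have "c \<le> L" "U \<le> d"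
      by (metis add.commute add_le_cancel_left diff_le_eq field_le_epsilon)+
    then show "I_mlr \<omega> \<subseteq> I" unfolding Imlr cd by auto
  qed
  show ?thesis using c1 c2 c3 by blast
qed


end
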